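(* Let $E$ be a locally compact Polish space and let $T$ be a $\mathcal{C}_b$-semigroup of kernel operators on $\mathcal{B}_b(E)$ of type $(M,\omega)$ consisting of strong Feller operators, with full generator $\hat A$ and Laplace transform $(R(\lambda))_{\operatorname{Re}\lambda>\omega}$. Let $\hat B$ and $\hat B_n$, $n\in\mathds{N}$, be single-valued linear operators with $D(\hat A)$ contained in their domains, each satisfying: (i) for every $t>0$, its composition with $T(t)$, defined on $D(\hat A)$, extends to a kernel operator on $\mathcal{B}_b(E)$; (ii) its composition with $R(\lambda)$ is a kernel operator for all $\lambda>\omega$; (iii) $(t,x)\mapsto \hat BT(t)f(x)$ (resp. with $\hat B_n$) is measurable for $f\in\mathcal{B}_b(E)$; (iv) $\|\hat BT(t)\|$ (resp. $\|\hat B_nT(t)\|$) is bounded by a function integrable near $0$. Assume: (1) $\sup_n\|\hat B_nR(\lambda)\|\to0$ as $\lambda\to\infty$; (2) $\hat B_nR(\lambda)h\rightharpoonup\hat BR(\lambda)h$ for every $h\in\mathcal{B}_b(E)$ and large $\lambda$; (3) $h_n\rightharpoonup0$ implies $\hat B_nR(\lambda)h_n\rightharpoonup0$ for large $\lambda$. Assume additionally that $R(\lambda)\ge0$ for all sufficiently large $\lambda$. Then for all sufficiently large $\lambda$ and every $f\in\mathcal{B}_b(E)$, $(\lambda-(\hat A+\hat B_n))^{-1}f\to(\lambda-(\hat A+\hat B))^{-1}f$ uniformly on compact subsets of $E$.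
   Context: Kernel operator: $Tf(x)=\int f(y)k(x,dy)$ with a bounded kernel. Semigroup of kernel operators of type $(M,\omega)$: kernel operators $T(t)$, $t>0$, with semigroup law, $\|T(t)\|\le Me^{\omega t}$, $(t,x)\mapsto T(t)f(x)$ measurable. $R(\lambda)f(x)=\int_0^\infty e^{-\lambda t}T(t)f(x)dt$. Full generator $\hat A=\{(f,g):T(t)f-f=\int_0^tT(s)g\,ds\ \forall t>0\}$. $\mathcal{C}_b$-semigroup: leaves bounded continuous functions invariant, and $T(t)f\to f$ boundedly pointwise as $t\to0$ for such $f$. Strong Feller: maps bounded measurable into bounded continuous functions. $\hat A+\hat B=\{(u,f+\hat Bu):(u,f)\in\hat A\}$; $(\lambda-(\hat A+\hat B))^{-1}$ is the inverse of the multivalued operator $\lambda-(\hat A+\hat B)$. $h_n\rightharpoonup h$: $\sup_n\|h_n\|_\infty<\infty$ and pointwise convergence (equivalently convergence against all bounded signed measures). *)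

theory Defs
  imports "HOL-Analysis.Analysis"
begin

definition Bb :: "('a::topological_space \<Rightarrow> real) set" where
  "Bb = {f. f \<in> borel_measurable borel \<and> (\<exists>C. \<forall>x. \<bar>f x\<bar> \<le> C)}"

definition Cb :: "('a::topological_space \<Rightarrow> real) set" where
  "Cb = {f. continuous_on UNIV f \<and> (\<exists>C. \<forall>x. \<bar>f x\<bar> \<le> C)}"

definition opn :: "(('a::topological_space \<Rightarrow> real) \<Rightarrow> ('a \<Rightarrow> real)) \<Rightarrow> real" where
  "opn T = (SUP f\<in>{f\<in>Bb. \<forall>x. \<bar>f x\<bar> \<le> 1}. SUP x. \<bar>T f x\<bar>)"

definition signed_measure :: "('a::topological_space set \<Rightarrow> real) \<Rightarrow> bool" where
  "signed_measure \<sigma> \<longleftrightarrow>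
     (\<forall>A::nat \<Rightarrow> 'a set. range A \<subseteq> sets borel \<and> disjoint_family A
        \<longrightarrow> (\<lambda>n. \<sigma> (A n)) sums \<sigma> (\<Union>n. A n))"

text \<open>Integral of f against a signed measure, via a Jordan-type decomposition
  (independent of the chosen decomposition).\<close>
definition signed_integral :: "('a::topological_space set \<Rightarrow> real) \<Rightarrow> ('a \<Rightarrow> real) \<Rightarrow> real" where
  "signed_integral \<sigma> f = (SOME v. \<exists>\<mu> \<nu>. finite_measure \<mu> \<and> finite_measure \<nu> \<and>
      sets \<mu> = sets borel \<and> sets \<nu> = sets borel \<and>
      (\<forall>A\<in>sets borel. \<sigma> A = measure \<mu> A - measure \<nu> A) \<and>
      v = integral\<^sup>L \<mu> f - integral\<^sup>L \<nu> f)"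

definition bounded_kernel :: "('a::topological_space \<Rightarrow> 'a set \<Rightarrow> real) \<Rightarrow> bool" where
  "bounded_kernel k \<longleftrightarrow>
     (\<forall>x. signed_measure (k x)) \<and>
     (\<forall>A\<in>sets borel. (\<lambda>x. k x A) \<in> borel_measurable borel) \<and>
     (\<exists>C. \<forall>x n (A::nat \<Rightarrow> 'a set). (\<forall>i<n. A i \<in> sets borel) \<and> disjoint_family_on A {..<n}
          \<longrightarrow> (\<Sum>i<n. \<bar>k x (A i)\<bar>) \<le> C)"

definition kernel_op :: "(('a::topological_space \<Rightarrow> real) \<Rightarrow> ('a \<Rightarrow> real)) \<Rightarrow> bool" where
  "kernel_op T \<longleftrightarrow> (\<exists>k. bounded_kernel k \<and> (\<forall>f\<in>Bb. \<forall>x. T f x = signed_integral (k x) f))"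

definition kernel_semigroup ::
  "(real \<Rightarrow> ('a::topological_space \<Rightarrow> real) \<Rightarrow> ('a \<Rightarrow> real)) \<Rightarrow> real \<Rightarrow> real \<Rightarrow> bool" where
  "kernel_semigroup T M \<omega> \<longleftrightarrow>
     (\<forall>t>0. kernel_op (T t)) \<and>
     (\<forall>t>0. \<forall>s>0. \<forall>f\<in>Bb. T (t + s) f = T t (T s f)) \<and>
     (\<forall>t>0. opn (T t) \<le> M * exp (\<omega> * t)) \<and>
     (\<forall>f\<in>Bb. (\<lambda>(t, x). T t f x) \<in> borel_measurable (restrict_space borel ({0<..} \<times> UNIV)))"

definition Cb_semigroup :: "(real \<Rightarrow> ('a::topological_space \<Rightarrow> real) \<Rightarrow> ('a \<Rightarrow> real)) \<Rightarrow> bool" where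
  "Cb_semigroup T \<longleftrightarrow>
     (\<forall>t>0. \<forall>f\<in>Cb. T t f \<in> Cb) \<and>
     (\<forall>f\<in>Cb. (\<exists>C \<delta>. \<delta> > 0 \<and> (\<forall>t. 0 < t \<and> t < \<delta> \<longrightarrow> (\<forall>x. \<bar>T t f x\<bar> \<le> C))) \<and>
              (\<forall>x. ((\<lambda>t. T t f x) \<longlongrightarrow> f x) (at_right 0)))"

definition strong_feller :: "(('a::topological_space \<Rightarrow> real) \<Rightarrow> ('a \<Rightarrow> real)) \<Rightarrow> bool" where
  "strong_feller S \<longleftrightarrow> (\<forall>f\<in>Bb. S f \<in> Cb)"

definition laplace :: "(real \<Rightarrow> ('a::topological_space \<Rightarrow> real) \<Rightarrow> ('a \<Rightarrow> real)) \<Rightarrow> real \<Rightarrow> ('a \<Rightarrow> real) \<Rightarrow> ('a \<Rightarrow> real)" where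
  "laplace T lam f x = (LINT t:{0<..}|lborel. exp (- lam * t) * T t f x)"

definition full_gen :: "(real \<Rightarrow> ('a::topological_space \<Rightarrow> real) \<Rightarrow> ('a \<Rightarrow> real)) \<Rightarrow> (('a \<Rightarrow> real) \<times> ('a \<Rightarrow> real)) set" where
  "full_gen T = {(f, g). f \<in> Bb \<and> g \<in> Bb \<and>
      (\<forall>t>0. \<forall>x. T t f x - f x = (LINT s:{0<..t}|lborel. T s g x))}"

definition rel_plus :: "(('a \<Rightarrow> real) \<times> ('a \<Rightarrow> real)) set \<Rightarrow> (('a \<Rightarrow> real) \<Rightarrow> ('a \<Rightarrow> real)) \<Rightarrow> (('a \<Rightarrow> real) \<times> ('a \<Rightarrow> real)) set" where
  "rel_plus A B = {(u, \<lambda>x. f x + B u x) | u f. (u, f) \<in> A}"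

definition lam_minus :: "real \<Rightarrow> (('a \<Rightarrow> real) \<times> ('a \<Rightarrow> real)) set \<Rightarrow> (('a \<Rightarrow> real) \<times> ('a \<Rightarrow> real)) set" where
  "lam_minus lam C = {(u, \<lambda>x. lam * u x - g x) | u g. (u, g) \<in> C}"

definition rel_inv :: "('b \<times> 'b) set \<Rightarrow> ('b \<times> 'b) set" where
  "rel_inv C = {(g, u). (u, g) \<in> C}"

definition bp_conv :: "(nat \<Rightarrow> 'a \<Rightarrow> real) \<Rightarrow> ('a \<Rightarrow> real) \<Rightarrow> bool" where
  "bp_conv hs h \<longleftrightarrow> (\<exists>C. \<forall>n x. \<bar>hs n x\<bar> \<le> C) \<and> (\<forall>x. (\<lambda>n. hs n x) \<longlonglongrightarrow> h x)"

text \<open>Admissible perturbation B w.r.t. T (conditions (i)-(iv)), with BT t the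
  kernel-operator extension of B T(t) from D(A).\<close>
definition admissible_pert ::
  "(real \<Rightarrow> ('a::topological_space \<Rightarrow> real) \<Rightarrow> ('a \<Rightarrow> real)) \<Rightarrow> real \<Rightarrow>
   (('a \<Rightarrow> real) \<Rightarrow> ('a \<Rightarrow> real)) \<Rightarrow> (real \<Rightarrow> ('a \<Rightarrow> real) \<Rightarrow> ('a \<Rightarrow> real)) \<Rightarrow> bool" where
  "admissible_pert T \<omega> B BT \<longleftrightarrow>
     (\<forall>f\<in>Domain (full_gen T). B f \<in> Bb) \<and>
     (\<forall>f\<in>Domain (full_gen T). \<forall>g\<in>Domain (full_gen T). \<forall>c a.
        B (\<lambda>x. c * f x + a * g x) = (\<lambda>x. c * B f x + a * B g x)) \<and>
     (\<forall>t>0. kernel_op (BT t) \<and> (\<forall>f\<in>Domain (full_gen T). BT t f = B (T t f))) \<and>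
     (\<forall>lam>\<omega>. kernel_op (\<lambda>f. B (laplace T lam f))) \<and>
     (\<forall>f\<in>Bb. (\<lambda>(t, x). BT t f x) \<in> borel_measurable (restrict_space borel ({0<..} \<times> UNIV))) \<and>
     (\<exists>\<phi> \<delta>. \<delta> > 0 \<and> set_integrable lborel {0<..<\<delta>} \<phi> \<and> (\<forall>t>0. opn (BT t) \<le> \<phi> t))"

end

theory Submission
  imports Defs "HOL-Analysis.Analysis"
begin


lemma sm_empty:
  assumes "signed_measure \<sigma>" shows "\<sigma> {} = 0"
proof -
  have "(\<lambda>n. \<sigma> ((\<lambda>i. {}::'a set) n)) sums \<sigma> (\<Union>n. (\<lambda>i. {}) n)"
    using assms unfolding signed_measure_def by (auto simp: disjoint_family_on_def)
  then have "summable (\<lambda>n. \<sigma> {})" by (simp add: sums_summable)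
  then have "(\<lambda>n. \<sigma> {}) \<longlonglongrightarrow> 0" by (rule summable_LIMSEQ_zero)
  then show ?thesis using LIMSEQ_const_iff by blast
qed

lemma sm_fin_add:
  fixes F :: "nat \<Rightarrow> 'a::topological_space set"
  assumes "signed_measure \<sigma>" "\<And>i. i < n \<Longrightarrow> F i \<in> sets borel" "disjoint_family_on F {..<n}"
  shows "\<sigma> (\<Union>i<n. F i) = (\<Sum>i<n. \<sigma> (F i))"
proof -
  define G where "G i = (if i < n then F i else {})" for i
  have "range G \<subseteq> sets borel" using assms(2) by (auto simp: G_def)
  moreover have "disjoint_family G" using assms(3)
    by (auto simp: G_def disjoint_family_on_def)
  ultimately have s: "(\<lambda>i. \<sigma> (G i)) sums \<sigma> (\<Union>i. G i)"
    using assms(1) unfolding signed_measure_def by blast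
  have u: "(\<Union>i. G i) = (\<Union>i<n. F i)" by (auto simp: G_def split: if_splits)
  have "(\<lambda>i. \<sigma> (G i)) = (\<lambda>i. if i \<in> {..<n} then \<sigma> (F i) else 0)"
    using sm_empty[OF assms(1)] by (auto simp: G_def)
  moreover have "(\<lambda>i. if i \<in> {..<n} then \<sigma> (F i) else 0) sums (\<Sum>i<n. \<sigma> (F i))"
    by (rule sums_If_finite_set) simp
  ultimately show ?thesis using s u sums_unique2 by metis
qed

lemma sm_add:
  assumes "signed_measure \<sigma>" "A \<in> sets borel" "B \<in> sets borel" "A \<inter> B = {}"
  shows "\<sigma> (A \<union> B) = \<sigma> A + \<sigma> B"
proof -
  define F where "F i = (if i = 0 then A else B)" for i :: nat
  have "\<sigma> (\<Union>i<2. F i) = (\<Sum>i<2. \<sigma> (F i))"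
    using assms by (intro sm_fin_add) (auto simp: F_def disjoint_family_on_def)
  moreover have "(\<Union>i<2. F i) = A \<union> B" by (auto simp: F_def eval_nat_numeral lessThan_Suc)
  ultimately show ?thesis by (simp add: F_def eval_nat_numeral lessThan_Suc)
qed

lemma sm_diff:
  assumes "signed_measure \<sigma>" "A \<in> sets borel" "B \<in> sets borel"
  shows "\<sigma> (A - B) = \<sigma> A - \<sigma> (A \<inter> B)"
proof -
  have "(A - B) \<union> (A \<inter> B) = A" by blast
  moreover have "(A - B) \<inter> (A \<inter> B) = {}" by blast
  ultimately show ?thesis using sm_add[OF assms(1), of "A - B" "A \<inter> B"] assms by auto
qed

lemma sm_union':
  assumes "signed_measure \<sigma>" "A \<in> sets borel" "B \<in> sets borel"
  shows "\<sigma> (A \<union> B) = \<sigma> A + \<sigma> (B - A)"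
  using sm_add[OF assms(1), of A "B - A"] assms by auto

lemma sm_incseq:
  assumes "signed_measure \<sigma>" "\<And>i. A i \<in> sets borel" "incseq A"
  shows "(\<lambda>n. \<sigma> (A n)) \<longlonglongrightarrow> \<sigma> (\<Union>n. A n)"
proof -
  have r: "range (disjointed A) \<subseteq> sets borel"
    using assms(2) by (intro sets.range_disjointed_sets) auto
  have "(\<lambda>i. \<sigma> (disjointed A i)) sums \<sigma> (\<Union>i. disjointed A i)"
    using assms(1) r disjoint_family_disjointed unfolding signed_measure_def by blast
  then have "(\<lambda>n. \<Sum>i<n. \<sigma> (disjointed A i)) \<longlonglongrightarrow> \<sigma> (\<Union>i. A i)"
    by (simp add: sums_def UN_disjointed_eq)
  moreover have "(\<Sum>i<Suc n. \<sigma> (disjointed A i)) = \<sigma> (A n)" for n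
  proof -
    have "(\<Sum>i<Suc n. \<sigma> (disjointed A i)) = \<sigma> (\<Union>i<Suc n. disjointed A i)"
      using r by (intro sm_fin_add[symmetric] assms(1))
        (auto intro: disjoint_family_on_mono[OF _ disjoint_family_disjointed])
    also have "(\<Union>i<Suc n. disjointed A i) = (\<Union>i\<in>{0..<Suc n}. A i)"
      using finite_UN_disjointed_eq by (simp add: lessThan_atLeast0)
    also have "\<dots> = A n"
      using assms(3) by (auto simp: incseq_def less_Suc_eq_le) blast
    finally show ?thesis .
  qed
  ultimately show ?thesis
    using LIMSEQ_Suc[of "\<lambda>n. \<Sum>i<n. \<sigma> (disjointed A i)"] by simp
qed

lemma sm_decseq:
  assumes "signed_measure \<sigma>" "\<And>i. A i \<in> sets borel" "decseq A"
  shows "(\<lambda>n. \<sigma> (A n)) \<longlonglongrightarrow> \<sigma> (\<Inter>n. A n)"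
proof -
  define B where "B n = A 0 - A n" for n
  have Bs: "B n \<in> sets borel" for n using assms(2) by (auto simp: B_def)
  have "incseq B" using assms(3) by (auto simp: B_def incseq_def decseq_def)
  from sm_incseq[OF assms(1) Bs this]
  have l: "(\<lambda>n. \<sigma> (B n)) \<longlonglongrightarrow> \<sigma> (\<Union>n. B n)" .
  have "\<sigma> (B n) = \<sigma> (A 0) - \<sigma> (A n)" for n
  proof -
    have "A 0 \<inter> A n = A n" using assms(3) by (auto simp: decseq_def)
    then show ?thesis unfolding B_def using sm_diff[OF assms(1) assms(2) assms(2)] by metis
  qed
  moreover have "(\<Union>n. B n) = A 0 - (\<Inter>n. A n)" by (auto simp: B_def)
  moreover have "\<sigma> (A 0 - (\<Inter>n. A n)) = \<sigma> (A 0) - \<sigma> (\<Inter>n. A n)"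
  proof -
    have "A 0 \<inter> (\<Inter>n. A n) = (\<Inter>n. A n)" by auto
    moreover have "(\<Inter>n. A n) \<in> sets borel" using assms(2) by auto
    ultimately show ?thesis using sm_diff[OF assms(1) assms(2)[of 0], of "\<Inter>n. A n"] by metis
  qed
  ultimately have "(\<lambda>n. \<sigma> (A 0) - \<sigma> (A n)) \<longlonglongrightarrow> \<sigma> (A 0) - \<sigma> (\<Inter>n. A n)" using l by simp
  then have "(\<lambda>n. \<sigma> (A 0) - (\<sigma> (A 0) - \<sigma> (A n))) \<longlonglongrightarrow> \<sigma> (A 0) - (\<sigma> (A 0) - \<sigma> (\<Inter>n. A n))"
    by (rule tendsto_diff[OF tendsto_const])
  moreover have "(\<lambda>n. \<sigma> (A 0) - (\<sigma> (A 0) - \<sigma> (A n))) = (\<lambda>n. \<sigma> (A n))" by simp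
  moreover have "\<sigma> (A 0) - (\<sigma> (A 0) - \<sigma> (\<Inter>n. A n)) = \<sigma> (\<Inter>n. A n)" by simp
  ultimately show ?thesis by metis
qed

lemma sm_hahn:
  fixes \<sigma> :: "'a::topological_space set \<Rightarrow> real"
  assumes sm: "signed_measure \<sigma>" and bd: "\<And>A. A \<in> sets borel \<Longrightarrow> \<sigma> A \<le> C"
  shows "\<exists>Y\<in>sets borel. (\<forall>X\<in>sets borel. X \<subseteq> Y \<longrightarrow> 0 \<le> \<sigma> X) \<and> (\<forall>X\<in>sets borel. X \<inter> Y = {} \<longrightarrow> \<sigma> X \<le> 0)"
proof -
  let ?S = "sets (borel :: 'a measure)"
  define d where "d = \<sigma>"
  have [intro]: "bdd_above (d`?S)"
    using bd by (auto simp: d_def intro!: bdd_aboveI[where M=C])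
  define \<gamma> where "\<gamma> = (SUP X\<in>?S. d X)"
  have le_\<gamma>[intro]: "X \<in> ?S \<Longrightarrow> d X \<le> \<gamma>" for X
    by (auto simp: \<gamma>_def intro!: cSUP_upper)
  have "\<exists>X\<in>?S. \<gamma> - 1 / 2^n < d X" for n
    unfolding \<gamma>_def by (intro less_cSUP_iff[THEN iffD1]) auto
  then have "\<exists>f. \<forall>n. f n \<in> ?S \<and> d (f n) > \<gamma> - 1 / 2^n"
    by metis
  then obtain E where Es: "\<And>n. E n \<in> ?S" and E: "\<And>n. d (E n) > \<gamma> - 1 / 2^n"
    by auto
  define F where "F m n = (if m \<le> n then \<Inter>i\<in>{m..n}. E i else UNIV)" for m n
  have Fs: "F m n \<in> ?S" for m n
    using Es by (auto simp: F_def)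
  have 1: "\<gamma> - 2 / 2 ^ m + 1 / 2 ^ n \<le> d (F m n)" if "m \<le> n" for m n
    using that
  proof (induct rule: dec_induct)
    case base with E[of m] show ?case
      by (simp add: F_def field_simps)
  next
    case (step i)
    have F_Suc: "F m (Suc i) = F m i \<inter> E (Suc i)"
      using \<open>m \<le> i\<close> by (auto simp: F_def le_Suc_eq)
    have "\<gamma> + (\<gamma> - 2 / 2^m + 1 / 2 ^ Suc i) \<le> (\<gamma> - 1 / 2^Suc i) + (\<gamma> - 2 / 2^m + 1 / 2^i)"
      by (simp add: field_simps)
    also have "\<dots> \<le> d (E (Suc i)) + d (F m i)"
      using E[of "Suc i"] by (intro add_mono step) auto
    also have "\<dots> = d (E (Suc i)) + d (F m i - E (Suc i)) + d (F m (Suc i))"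
      using sm_diff[OF sm Fs Es, of m i "Suc i"] by (simp add: d_def F_Suc)
    also have "\<dots> = d (E (Suc i) \<union> F m i) + d (F m (Suc i))"
      using sm_union'[OF sm Es Fs, of "Suc i" m i] by (simp add: d_def)
    also have "\<dots> \<le> \<gamma> + d (F m (Suc i))"
      using Es Fs by auto
    finally show ?case
      by auto
  qed
  define F' where "F' m = (\<Inter>i\<in>{m..}. E i)" for m
  have F'_eq: "F' m = (\<Inter>i. F m (i + m))" for m
    by (fastforce simp: le_iff_add[of m] F'_def F_def)
  have F's: "F' m \<in> ?S" for m
    using Es by (auto simp: F'_def)
  have Us: "(\<Union>m. F' m) \<in> ?S" using F's by auto
  have \<gamma>_le: "\<gamma> - 0 \<le> d (\<Union>m. F' m)"
  proof (rule LIMSEQ_le)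
    show "(\<lambda>n. \<gamma> - 2 / 2 ^ n) \<longlonglongrightarrow> \<gamma> - 0"
      by (intro tendsto_intros LIMSEQ_divide_realpow_zero) auto
    have "incseq F'"
      by (auto simp: incseq_def F'_def)
    then show "(\<lambda>m. d (F' m)) \<longlonglongrightarrow> d (\<Union>m. F' m)"
      unfolding d_def by (rule sm_incseq[OF sm F's])
    have "\<gamma> - 2 / 2 ^ m + 0 \<le> d (F' m)" for m
    proof (rule LIMSEQ_le)
      have *: "decseq (\<lambda>n. F m (n + m))"
        by (auto simp: decseq_def F_def)
      show "(\<lambda>n. d (F m n)) \<longlonglongrightarrow> d (F' m)"
        unfolding d_def F'_eq
        by (rule LIMSEQ_offset[where k=m]) (rule sm_decseq[OF sm Fs *])
      show "(\<lambda>n. \<gamma> - 2 / 2 ^ m + 1 / 2 ^ n) \<longlonglongrightarrow> \<gamma> - 2 / 2 ^ m + 0"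
        by (intro tendsto_add LIMSEQ_divide_realpow_zero tendsto_const) auto
      show "\<exists>N. \<forall>n\<ge>N. \<gamma> - 2 / 2 ^ m + 1 / 2 ^ n \<le> d (F m n)"
        using 1[of m] by (intro exI[of _ m]) auto
    qed
    then show "\<exists>N. \<forall>n\<ge>N. \<gamma> - 2 / 2 ^ n \<le> d (F' n)"
      by auto
  qed
  show ?thesis
  proof (intro bexI[OF _ Us] conjI ballI impI)
    fix X assume Xs: "X \<in> ?S" and X: "X \<subseteq> (\<Union>m. F' m)"
    have "d (\<Union>m. F' m) - d X = d ((\<Union>m. F' m) - X)"
    proof -
      have "X \<inter> (\<Union>m. F' m) = X" using X by blast
      then show ?thesis using sm_diff[OF sm Us Xs] by (simp add: d_def Int_commute)
    qed
    also have "\<dots> \<le> \<gamma>"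
      using Us Xs by auto
    finally show "0 \<le> \<sigma> X"
      using \<gamma>_le by (auto simp: d_def)
  next
    fix X assume Xs: "X \<in> ?S" and X: "X \<inter> (\<Union>m. F' m) = {}"
    then have "d (\<Union>m. F' m) + d X = d (X \<union> (\<Union>m. F' m))"
      using sm_add[OF sm Us Xs] by (simp add: d_def Int_commute Un_commute)
    also have "\<dots> \<le> \<gamma>"
      using Us Xs by auto
    finally show "\<sigma> X \<le> 0"
      using \<gamma>_le by (auto simp: d_def)
  qed
qed

lemma sm_restr:
  assumes "signed_measure \<sigma>" "Y \<in> sets borel"
  shows "signed_measure (\<lambda>A. \<sigma> (A \<inter> Y))"
  unfolding signed_measure_def
proof (intro allI impI)
  fix A :: "nat \<Rightarrow> 'a set" assume a: "range A \<subseteq> sets borel \<and> disjoint_family A"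
  have "range (\<lambda>i. A i \<inter> Y) \<subseteq> sets borel" using a assms(2) by auto
  moreover have "disjoint_family (\<lambda>i. A i \<inter> Y)" using a by (auto simp: disjoint_family_on_def)
  ultimately have "(\<lambda>i. \<sigma> (A i \<inter> Y)) sums \<sigma> (\<Union>i. A i \<inter> Y)"
    using assms(1) unfolding signed_measure_def by blast
  moreover have "(\<Union>i. A i \<inter> Y) = (\<Union>i. A i) \<inter> Y" by auto
  ultimately show "(\<lambda>i. \<sigma> (A i \<inter> Y)) sums \<sigma> ((\<Union>i. A i) \<inter> Y)" by simp
qed

lemma sm_neg:
  assumes "signed_measure \<sigma>" shows "signed_measure (\<lambda>A. - \<sigma> A)"
  using assms unfolding signed_measure_def by (auto intro: sums_minus)

lemma sm_to_measure:
  fixes \<tau> :: "'a::topological_space set \<Rightarrow> real"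
  assumes sm: "signed_measure \<tau>" and nn: "\<And>A. A \<in> sets borel \<Longrightarrow> 0 \<le> \<tau> A"
  defines "M \<equiv> measure_of UNIV (sets borel) (\<lambda>A. ennreal (\<tau> A))"
  shows "sets M = sets borel" "finite_measure M" "\<forall>A\<in>sets borel. measure M A = \<tau> A"
proof -
  show sM: "sets M = sets borel" unfolding M_def
    by (metis sets.sets_measure_of_eq space_borel)
  have sa: "sigma_algebra UNIV (sets (borel::'a measure))"
    by (metis sets.sigma_algebra_axioms space_borel)
  have pos: "positive (sets borel) (\<lambda>A. ennreal (\<tau> A))"
    unfolding positive_def using sm_empty[OF sm] by simp
  have ca: "countably_additive (sets borel) (\<lambda>A. ennreal (\<tau> A))"
    unfolding countably_additive_def
  proof (intro allI impI)
    fix A :: "nat \<Rightarrow> 'a set" assume a: "range A \<subseteq> sets borel" "disjoint_family A" "\<Union> (range A) \<in> sets borel"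
    then have s: "(\<lambda>i. \<tau> (A i)) sums \<tau> (\<Union>i. A i)" using sm unfolding signed_measure_def by blast
    have "(\<Sum>i. ennreal (\<tau> (A i))) = ennreal (\<Sum>i. \<tau> (A i))"
      using a s nn by (intro suminf_ennreal2) (auto simp: sums_summable)
    then show "(\<Sum>i. ennreal (\<tau> (A i))) = ennreal (\<tau> (\<Union> (range A)))"
      using s sums_unique by metis
  qed
  have em: "emeasure M A = ennreal (\<tau> A)" if "A \<in> sets borel" for A
    unfolding M_def by (rule emeasure_measure_of_sigma[OF sa pos ca that])
  show "finite_measure M"
  proof (rule finite_measureI)
    have "space M = UNIV" unfolding M_def by simp
    then show "emeasure M (space M) \<noteq> \<infinity>" using em[of UNIV] by simp
  qed
  show "\<forall>A\<in>sets borel. measure M A = \<tau> A"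
    using em nn by (simp add: measure_def)
qed

definition decomp :: "('a::topological_space set \<Rightarrow> real) \<Rightarrow> 'a measure \<Rightarrow> 'a measure \<Rightarrow> bool" where
  "decomp \<sigma> \<mu> \<nu> \<longleftrightarrow> finite_measure \<mu> \<and> finite_measure \<nu> \<and>
      sets \<mu> = sets borel \<and> sets \<nu> = sets borel \<and>
      (\<forall>A\<in>sets borel. \<sigma> A = measure \<mu> A - measure \<nu> A)"

lemma jordan:
  fixes \<sigma> :: "'a::topological_space set \<Rightarrow> real"
  assumes sm: "signed_measure \<sigma>"
    and bd: "\<forall>n (A::nat \<Rightarrow> 'a set). (\<forall>i<n. A i \<in> sets borel) \<and> disjoint_family_on A {..<n}
          \<longrightarrow> (\<Sum>i<n. \<bar>\<sigma> (A i)\<bar>) \<le> C"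
  shows "\<exists>\<mu> \<nu>. decomp \<sigma> \<mu> \<nu> \<and> measure \<mu> UNIV + measure \<nu> UNIV \<le> C"
proof -
  have b1: "\<sigma> A \<le> C" if "A \<in> sets borel" for A
    using bd[rule_format, of 1 "\<lambda>_. A"] that by (auto simp: disjoint_family_on_def)
  obtain Y where Y: "Y \<in> sets borel" and Yp: "\<forall>X\<in>sets borel. X \<subseteq> Y \<longrightarrow> 0 \<le> \<sigma> X"
    and Yn: "\<forall>X\<in>sets borel. X \<inter> Y = {} \<longrightarrow> \<sigma> X \<le> 0"
    using sm_hahn[OF sm b1] by blast
  define \<mu> where "\<mu> = measure_of UNIV (sets borel) (\<lambda>A. ennreal (\<sigma> (A \<inter> Y)))"
  define \<nu> where "\<nu> = measure_of UNIV (sets borel) (\<lambda>A. ennreal (- \<sigma> (A \<inter> (UNIV - Y))))"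
  have smY: "signed_measure (\<lambda>A. \<sigma> (A \<inter> Y))" by (rule sm_restr[OF sm Y])
  have smY': "signed_measure (\<lambda>A. - \<sigma> (A \<inter> (UNIV - Y)))" using Y by (intro sm_neg sm_restr[OF sm]) auto
  have nn1: "0 \<le> \<sigma> (A \<inter> Y)" if "A \<in> sets borel" for A using Yp that Y by auto
  have nn2: "0 \<le> - \<sigma> (A \<inter> (UNIV - Y))" if "A \<in> sets borel" for A
  proof -
    have "A \<inter> (UNIV - Y) \<inter> Y = {}" by blast
    moreover have "A \<inter> (UNIV - Y) \<in> sets borel" using that Y by auto
    ultimately show ?thesis using Yn by fastforce
  qed
  note m1 = sm_to_measure[OF smY nn1, folded \<mu>_def]
  note m2 = sm_to_measure[OF smY' nn2, folded \<nu>_def]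
  have "decomp \<sigma> \<mu> \<nu>"
    unfolding decomp_def
  proof (intro conjI ballI m1 m2)
    fix A :: "'a set" assume A: "A \<in> sets borel"
    have "\<sigma> A = \<sigma> (A \<inter> Y) + \<sigma> (A \<inter> (UNIV - Y))"
    proof -
      have "A = (A \<inter> Y) \<union> (A \<inter> (UNIV - Y))" "(A \<inter> Y) \<inter> (A \<inter> (UNIV - Y)) = {}" by blast+
      moreover have "A \<inter> Y \<in> sets borel" "A \<inter> (UNIV - Y) \<in> sets borel" using A Y by auto
      ultimately show ?thesis using sm_add[OF sm, of "A \<inter> Y" "A \<inter> (UNIV - Y)"] by metis
    qed
    then show "\<sigma> A = measure \<mu> A - measure \<nu> A" using m1(3) m2(3) A by simp
  qed
  moreover have "measure \<mu> UNIV + measure \<nu> UNIV \<le> C"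
  proof -
    have "measure \<mu> UNIV = \<sigma> Y" using m1(3) by simp
    moreover have "measure \<nu> UNIV = - \<sigma> (UNIV - Y)" using m2(3) by simp
    moreover have "\<bar>\<sigma> Y\<bar> + \<bar>\<sigma> (UNIV - Y)\<bar> \<le> C"
      using bd[rule_format, of 2 "\<lambda>i. if i = 0 then Y else UNIV - Y"] Y
      by (auto simp: disjoint_family_on_def eval_nat_numeral lessThan_Suc less_Suc_eq Diff_Int_distrib2)
    ultimately show ?thesis by linarith
  qed
  ultimately show ?thesis by blast
qed


lemma meas_cong: "sets m = sets borel \<Longrightarrow> f \<in> borel_measurable borel \<Longrightarrow> f \<in> borel_measurable m"
  using measurable_cong_sets[of m borel borel borel] by blast

lemma fm_integrable:
  fixes f :: "'a::topological_space \<Rightarrow> real"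
  assumes "finite_measure m" "sets m = sets borel" "f \<in> borel_measurable borel" "\<And>x. \<bar>f x\<bar> \<le> B"
  shows "integrable m f"
  using assms meas_cong[OF assms(2,3)] by (intro finite_measure.integrable_const_bound[where B=B]) auto

lemma fm_dct:
  fixes U :: "nat \<Rightarrow> 'a::topological_space \<Rightarrow> real"
  assumes m: "finite_measure m" "sets m = sets borel"
    and U: "\<And>i. U i \<in> borel_measurable borel" and u: "u \<in> borel_measurable borel"
    and b: "\<And>i x. \<bar>U i x\<bar> \<le> B" and l: "\<And>x. (\<lambda>i. U i x) \<longlonglongrightarrow> u x"
  shows "(\<lambda>i. integral\<^sup>L m (U i)) \<longlonglongrightarrow> integral\<^sup>L m u"
proof (rule integral_dominated_convergence[where w="\<lambda>_. B"])
  show "u \<in> borel_measurable m" using meas_cong[OF m(2) u] .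
  show "U i \<in> borel_measurable m" for i using meas_cong[OF m(2) U] .
  show "integrable m (\<lambda>_. B)" using m(1) by (rule finite_measure.integrable_const)
  show "AE x in m. (\<lambda>i. U i x) \<longlonglongrightarrow> u x" using l by simp
  show "AE x in m. norm (U i x) \<le> B" for i using b by simp
qed

lemma four_meas_nn:
  fixes u :: "'a::topological_space \<Rightarrow> real"
  assumes fm: "finite_measure m1" "finite_measure m2" "finite_measure m3" "finite_measure m4"
    and s: "sets m1 = sets borel" "sets m2 = sets borel" "sets m3 = sets borel" "sets m4 = sets borel"
    and eq: "\<And>A. A \<in> sets borel \<Longrightarrow> measure m1 A + measure m2 A = measure m3 A + measure m4 A"
    and u: "u \<in> borel_measurable borel" "\<And>x. 0 \<le> u x"
  shows "(\<exists>B. \<forall>x. u x \<le> B) \<longrightarrow> integral\<^sup>L m1 u + integral\<^sup>L m2 u = integral\<^sup>L m3 u + integral\<^sup>L m4 u"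
  using u
proof (induction rule: borel_measurable_induct_real)
  case (set A)
  have "A \<in> sets m1" "A \<in> sets m2" "A \<in> sets m3" "A \<in> sets m4" using set s by auto
  then show ?case using eq[OF set] fm
    by (simp add: finite_measure.emeasure_finite)
next
  case (mult u c)
  show ?case
  proof (cases "c = 0")
    case True then show ?thesis by simp
  next
    case False
    show ?thesis
    proof
      assume "\<exists>B. \<forall>x. c * u x \<le> B"
      then obtain B where "\<And>x. c * u x \<le> B" by blast
      then have "u x \<le> B / c" for x using False mult(1) by (simp add: pos_le_divide_eq mult.commute)
      then have "integral\<^sup>L m1 u + integral\<^sup>L m2 u = integral\<^sup>L m3 u + integral\<^sup>L m4 u" using mult(4) by blast
      then show "integral\<^sup>L m1 (\<lambda>x. c * u x) + integral\<^sup>L m2 (\<lambda>x. c * u x) =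
                 integral\<^sup>L m3 (\<lambda>x. c * u x) + integral\<^sup>L m4 (\<lambda>x. c * u x)"
        by (simp add: distrib_left[symmetric])
    qed
  qed
next
  case (add u v)
  show ?case
  proof
    assume "\<exists>B. \<forall>x. v x + u x \<le> B"
    then obtain B where B: "\<And>x. v x + u x \<le> B" by blast
    have bu: "\<bar>u x\<bar> \<le> B" "\<bar>v x\<bar> \<le> B" for x using B[of x] \<open>\<And>x. 0 \<le> u x\<close>[of x] \<open>\<And>x. 0 \<le> v x\<close>[of x] by auto
    have i: "integrable m u" "integrable m v" if "finite_measure m" "sets m = sets borel" for m
      using that bu \<open>u \<in> borel_measurable borel\<close> \<open>v \<in> borel_measurable borel\<close> by (auto intro: fm_integrable)
    have eu: "\<exists>B. \<forall>x. u x \<le> B" and ev: "\<exists>B. \<forall>x. v x \<le> B" using bu by (auto simp: abs_le_iff)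
    have IHu: "integral\<^sup>L m1 u + integral\<^sup>L m2 u = integral\<^sup>L m3 u + integral\<^sup>L m4 u"
      using \<open>(\<exists>B. \<forall>x. u x \<le> B) \<longrightarrow> integral\<^sup>L m1 u + integral\<^sup>L m2 u = integral\<^sup>L m3 u + integral\<^sup>L m4 u\<close> eu by (rule mp)
    have IHv: "integral\<^sup>L m1 v + integral\<^sup>L m2 v = integral\<^sup>L m3 v + integral\<^sup>L m4 v"
      using \<open>(\<exists>B. \<forall>x. v x \<le> B) \<longrightarrow> integral\<^sup>L m1 v + integral\<^sup>L m2 v = integral\<^sup>L m3 v + integral\<^sup>L m4 v\<close> ev by (rule mp)
    show "integral\<^sup>L m1 (\<lambda>x. v x + u x) + integral\<^sup>L m2 (\<lambda>x. v x + u x) =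
               integral\<^sup>L m3 (\<lambda>x. v x + u x) + integral\<^sup>L m4 (\<lambda>x. v x + u x)"
      using IHu IHv i[OF fm(1) s(1)] i[OF fm(2) s(2)] i[OF fm(3) s(3)] i[OF fm(4) s(4)]
      by (simp add: integral_add)
  qed
next
  case (seq U)
  have inc: "incseq U" by fact
  have lim: "\<And>x. (\<lambda>i. U i x) \<longlonglongrightarrow> u x" using seq by simp
  have nnU: "\<And>i x. 0 \<le> U i x" by fact
  have mU: "\<And>i. U i \<in> borel_measurable borel" by fact
  have IHU: "\<And>i. (\<exists>B. \<forall>x. U i x \<le> B) \<longrightarrow> integral\<^sup>L m1 (U i) + integral\<^sup>L m2 (U i) = integral\<^sup>L m3 (U i) + integral\<^sup>L m4 (U i)" by fact
  show ?case
  proof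
    assume "\<exists>B. \<forall>x. u x \<le> B"
    then obtain B where B: "\<And>x. u x \<le> B" by blast
    have le: "U i x \<le> u x" for i x
    proof (rule incseq_le[OF _ lim])
      show "incseq (\<lambda>i. U i x)" using inc by (auto simp: incseq_def le_fun_def)
    qed
    have bU: "\<bar>U i x\<bar> \<le> B" for i x using le[of i x] B[of x] nnU[of i x] by auto
    have IH: "integral\<^sup>L m1 (U i) + integral\<^sup>L m2 (U i) = integral\<^sup>L m3 (U i) + integral\<^sup>L m4 (U i)" for i
    proof -
      have "\<exists>B. \<forall>x. U i x \<le> B" using bU by (auto simp: abs_le_iff)
      with IHU[of i] show ?thesis by (rule mp)
    qed
    have l: "(\<lambda>i. integral\<^sup>L m (U i)) \<longlonglongrightarrow> integral\<^sup>L m u" if "finite_measure m" "sets m = sets borel" for m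
      using that mU u(1) bU lim by (intro fm_dct[where B=B])
    have "(\<lambda>i. integral\<^sup>L m1 (U i) + integral\<^sup>L m2 (U i)) \<longlonglongrightarrow> integral\<^sup>L m1 u + integral\<^sup>L m2 u"
      using l fm s by (intro tendsto_add) auto
    moreover have "(\<lambda>i. integral\<^sup>L m1 (U i) + integral\<^sup>L m2 (U i)) \<longlonglongrightarrow> integral\<^sup>L m3 u + integral\<^sup>L m4 u"
      unfolding IH using l fm s by (intro tendsto_add) auto
    ultimately show "integral\<^sup>L m1 u + integral\<^sup>L m2 u = integral\<^sup>L m3 u + integral\<^sup>L m4 u"
      using LIMSEQ_unique by blast
  qed
qed

lemma four_meas:
  fixes f :: "'a::topological_space \<Rightarrow> real"
  assumes fm: "finite_measure m1" "finite_measure m2" "finite_measure m3" "finite_measure m4"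
    and s: "sets m1 = sets borel" "sets m2 = sets borel" "sets m3 = sets borel" "sets m4 = sets borel"
    and eq: "\<And>A. A \<in> sets borel \<Longrightarrow> measure m1 A + measure m2 A = measure m3 A + measure m4 A"
    and f: "f \<in> borel_measurable borel" "\<And>x. \<bar>f x\<bar> \<le> B"
  shows "integral\<^sup>L m1 f + integral\<^sup>L m2 f = integral\<^sup>L m3 f + integral\<^sup>L m4 f"
proof -
  define p where "p x = max (f x) 0" for x
  define n where "n x = max (- f x) 0" for x
  have pm: "p \<in> borel_measurable borel" "n \<in> borel_measurable borel" using f(1) unfolding p_def n_def by auto
  have pb: "\<bar>p x\<bar> \<le> B" "\<bar>n x\<bar> \<le> B" for x using f(2)[of x] by (auto simp: p_def n_def)
  have b1: "\<exists>B. \<forall>x. p x \<le> B" "\<exists>B. \<forall>x. n x \<le> B" using pb by (auto simp: abs_le_iff)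
  have nn: "\<And>x. 0 \<le> p x" "\<And>x. 0 \<le> n x" by (auto simp: p_def n_def)
  have P: "integral\<^sup>L m1 p + integral\<^sup>L m2 p = integral\<^sup>L m3 p + integral\<^sup>L m4 p"
    using four_meas_nn[OF fm s eq pm(1) nn(1)] b1(1) by (rule mp)
  have N: "integral\<^sup>L m1 n + integral\<^sup>L m2 n = integral\<^sup>L m3 n + integral\<^sup>L m4 n"
    using four_meas_nn[OF fm s eq pm(2) nn(2)] b1(2) by (rule mp)
  have fe: "f = (\<lambda>x. p x - n x)" by (auto simp: p_def n_def fun_eq_iff)
  have i: "integrable m p" "integrable m n" if "finite_measure m" "sets m = sets borel" for m
    using that pm pb by (auto intro: fm_integrable)
  show ?thesis unfolding fe
    using P N i[OF fm(1) s(1)] i[OF fm(2) s(2)] i[OF fm(3) s(3)] i[OF fm(4) s(4)]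
    by (simp add: integral_diff)
qed

lemma si_eq:
  assumes d: "decomp \<sigma> \<mu> \<nu>" and f: "f \<in> borel_measurable borel" "\<And>x. \<bar>f x\<bar> \<le> B"
  shows "signed_integral \<sigma> f = integral\<^sup>L \<mu> f - integral\<^sup>L \<nu> f"
proof -
  let ?P = "\<lambda>v. \<exists>\<mu> \<nu>. finite_measure \<mu> \<and> finite_measure \<nu> \<and>
      sets \<mu> = sets borel \<and> sets \<nu> = sets borel \<and>
      (\<forall>A\<in>sets borel. \<sigma> A = measure \<mu> A - measure \<nu> A) \<and>
      v = integral\<^sup>L \<mu> f - integral\<^sup>L \<nu> f"
  have "?P (integral\<^sup>L \<mu> f - integral\<^sup>L \<nu> f)" using d unfolding decomp_def by blast
  then have "?P (SOME v. ?P v)" by (rule someI)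
  then obtain \<mu>' \<nu>' where d': "decomp \<sigma> \<mu>' \<nu>'" and v: "(SOME v. ?P v) = integral\<^sup>L \<mu>' f - integral\<^sup>L \<nu>' f"
    unfolding decomp_def by blast
  have "integral\<^sup>L \<mu> f + integral\<^sup>L \<nu>' f = integral\<^sup>L \<mu>' f + integral\<^sup>L \<nu> f"
  proof -
    have D: "finite_measure \<mu>" "finite_measure \<nu>" "sets \<mu> = sets borel" "sets \<nu> = sets borel"
      "\<forall>A\<in>sets borel. \<sigma> A = measure \<mu> A - measure \<nu> A" using d unfolding decomp_def by blast+
    have D': "finite_measure \<mu>'" "finite_measure \<nu>'" "sets \<mu>' = sets borel" "sets \<nu>' = sets borel"
      "\<forall>A\<in>sets borel. \<sigma> A = measure \<mu>' A - measure \<nu>' A" using d' unfolding decomp_def by blast+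
    have e: "measure \<mu> A + measure \<nu>' A = measure \<mu>' A + measure \<nu> A" if "A \<in> sets borel" for A
      using D(5) D'(5) that by fastforce
    show ?thesis by (rule four_meas[OF D(1) D'(2) D'(1) D(2) D(3) D'(4) D'(3) D(4) e f])
  qed
  then show ?thesis unfolding signed_integral_def v by simp
qed

lemma Bb_iff: "f \<in> Bb \<longleftrightarrow> f \<in> borel_measurable borel \<and> (\<exists>C. \<forall>x. \<bar>f x\<bar> \<le> C)"
  by (simp add: Bb_def)

lemma Bb_bound: "f \<in> Bb \<Longrightarrow> \<exists>C\<ge>0. \<forall>x. \<bar>f x\<bar> \<le> C"
proof -
  assume "f \<in> Bb"
  then obtain C where C: "\<forall>x. \<bar>f x\<bar> \<le> C" unfolding Bb_def by blast
  have "0 \<le> C" using C[rule_format, of undefined] abs_ge_zero[of "f undefined"] by linarith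
  with C show ?thesis by blast
qed


lemma kernel_rep:
  fixes S :: "('a::topological_space \<Rightarrow> real) \<Rightarrow> 'a \<Rightarrow> real"
  assumes "kernel_op S"
  shows "\<exists>C\<ge>0. \<forall>x. \<exists>\<mu> \<nu>. finite_measure \<mu> \<and> finite_measure \<nu> \<and> sets \<mu> = sets borel \<and> sets \<nu> = sets borel
     \<and> measure \<mu> UNIV + measure \<nu> UNIV \<le> C \<and> (\<forall>f\<in>Bb. S f x = integral\<^sup>L \<mu> f - integral\<^sup>L \<nu> f)"
proof -
  obtain k where k: "bounded_kernel k" and S: "\<forall>f\<in>Bb. \<forall>x. S f x = signed_integral (k x) f"
    using assms unfolding kernel_op_def by blast
  obtain C where C: "\<forall>x n (A::nat \<Rightarrow> 'a set). (\<forall>i<n. A i \<in> sets borel) \<and> disjoint_family_on A {..<n}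
          \<longrightarrow> (\<Sum>i<n. \<bar>k x (A i)\<bar>) \<le> C" and sm: "\<forall>x. signed_measure (k x)"
    using k unfolding bounded_kernel_def by blast
  have "0 \<le> C" using spec[OF spec[OF spec[OF C, of undefined], of 0], of "\<lambda>i. {}"] by (simp add: disjoint_family_on_def)
  moreover have "\<exists>\<mu> \<nu>. finite_measure \<mu> \<and> finite_measure \<nu> \<and> sets \<mu> = sets borel \<and> sets \<nu> = sets borel
     \<and> measure \<mu> UNIV + measure \<nu> UNIV \<le> C \<and> (\<forall>f\<in>Bb. S f x = integral\<^sup>L \<mu> f - integral\<^sup>L \<nu> f)" for x
  proof -
    obtain \<mu> \<nu> where d: "decomp (k x) \<mu> \<nu>" and m: "measure \<mu> UNIV + measure \<nu> UNIV \<le> C"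
    proof -
      have "\<forall>n (A::nat \<Rightarrow> 'a set). (\<forall>i<n. A i \<in> sets borel) \<and> disjoint_family_on A {..<n}
          \<longrightarrow> (\<Sum>i<n. \<bar>k x (A i)\<bar>) \<le> C" using spec[OF C, of x] .
      from jordan[OF sm[rule_format, of x] this] show ?thesis using that by blast
    qed
    have "S f x = integral\<^sup>L \<mu> f - integral\<^sup>L \<nu> f" if fB: "f \<in> Bb" for f
    proof -
      obtain B where "f \<in> borel_measurable borel" "\<And>y. \<bar>f y\<bar> \<le> B" using fB unfolding Bb_def by blast
      then have "signed_integral (k x) f = integral\<^sup>L \<mu> f - integral\<^sup>L \<nu> f" by (rule si_eq[OF d])
      then show ?thesis using S fB by simp
    qed
    then show ?thesis using d m unfolding decomp_def by blast
  qed
  ultimately show ?thesis by blast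
qed


definition krep :: "(('a::topological_space \<Rightarrow> real) \<Rightarrow> 'a \<Rightarrow> real) \<Rightarrow> real \<Rightarrow> bool" where
  "krep S C \<longleftrightarrow> 0 \<le> C \<and> (\<forall>x. \<exists>\<mu> \<nu>. finite_measure \<mu> \<and> finite_measure \<nu> \<and> sets \<mu> = sets borel \<and> sets \<nu> = sets borel
     \<and> measure \<mu> UNIV + measure \<nu> UNIV \<le> C \<and> (\<forall>f\<in>Bb. S f x = integral\<^sup>L \<mu> f - integral\<^sup>L \<nu> f))"

lemma kernel_krep: "kernel_op S \<Longrightarrow> \<exists>C. krep S C"
  using kernel_rep unfolding krep_def by blast

lemma Bb_lin: "f \<in> Bb \<Longrightarrow> g \<in> Bb \<Longrightarrow> (\<lambda>y. a * f y + b * g y) \<in> Bb"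
proof -
  assume f: "f \<in> Bb" and g: "g \<in> Bb"
  obtain C where C: "\<forall>y. \<bar>f y\<bar> \<le> C" using f unfolding Bb_def by blast
  obtain D where D: "\<forall>y. \<bar>g y\<bar> \<le> D" using g unfolding Bb_def by blast
  have "\<bar>a * f y + b * g y\<bar> \<le> \<bar>a\<bar> * C + \<bar>b\<bar> * D" for y
  proof -
    have "\<bar>a * f y + b * g y\<bar> \<le> \<bar>a\<bar> * \<bar>f y\<bar> + \<bar>b\<bar> * \<bar>g y\<bar>" by (simp add: abs_mult abs_triangle_ineq[THEN order_trans])
    also have "\<dots> \<le> \<bar>a\<bar> * C + \<bar>b\<bar> * D" using C D by (intro add_mono mult_left_mono) auto
    finally show ?thesis .
  qed
  moreover have "(\<lambda>y. a * f y + b * g y) \<in> borel_measurable borel" using f g unfolding Bb_def by auto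
  ultimately show ?thesis unfolding Bb_def by blast
qed

lemma Bb_const: "(\<lambda>y. c) \<in> Bb"
  unfolding Bb_def by (auto intro: exI[of _ "\<bar>c\<bar>"])

lemma Bb_scale: "f \<in> Bb \<Longrightarrow> (\<lambda>y. a * f y) \<in> Bb"
  using Bb_lin[of f f a 0] by simp

lemma Bb_diff: "f \<in> Bb \<Longrightarrow> g \<in> Bb \<Longrightarrow> (\<lambda>y. f y - g y) \<in> Bb"
  using Bb_lin[of f g 1 "-1"] by simp

lemma Bb_add: "f \<in> Bb \<Longrightarrow> g \<in> Bb \<Longrightarrow> (\<lambda>y. f y + g y) \<in> Bb"
  using Bb_lin[of f g 1 1] by simp

lemma fm_abs_int:
  fixes f :: "'a::topological_space \<Rightarrow> real"
  assumes "finite_measure m" "sets m = sets borel" "f \<in> borel_measurable borel" "\<And>y. \<bar>f y\<bar> \<le> B"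
  shows "\<bar>integral\<^sup>L m f\<bar> \<le> B * measure m UNIV"
proof -
  have sp: "space m = UNIV" using assms(2) sets_eq_imp_space_eq by fastforce
  have i: "integrable m f" using assms by (rule fm_integrable)
  have "\<bar>integral\<^sup>L m f\<bar> \<le> integral\<^sup>L m (\<lambda>y. \<bar>f y\<bar>)" by (rule integral_abs_bound)
  also have "\<dots> \<le> integral\<^sup>L m (\<lambda>y. B)"
    using i assms(4) finite_measure.integrable_const[OF assms(1)] by (intro integral_mono) auto
  also have "\<dots> = B * measure m UNIV" using sp by simp
  finally show ?thesis .
qed

lemma K_lin:
  assumes "krep S C" "f \<in> Bb" "g \<in> Bb"
  shows "S (\<lambda>y. a * f y + b * g y) x = a * S f x + b * S g x"
proof -
  obtain \<mu> \<nu> where m: "finite_measure \<mu>" "finite_measure \<nu>" "sets \<mu> = sets borel" "sets \<nu> = sets borel"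
    and S: "\<forall>f\<in>Bb. S f x = integral\<^sup>L \<mu> f - integral\<^sup>L \<nu> f"
    using assms(1) unfolding krep_def by blast
  obtain Cf where Cf: "\<And>y. \<bar>f y\<bar> \<le> Cf" "f \<in> borel_measurable borel" using assms(2) unfolding Bb_def by blast
  obtain Cg where Cg: "\<And>y. \<bar>g y\<bar> \<le> Cg" "g \<in> borel_measurable borel" using assms(3) unfolding Bb_def by blast
  have i: "integrable m f" "integrable m g" if "finite_measure m" "sets m = sets borel" for m
    using fm_integrable[OF that Cf(2) Cf(1)] fm_integrable[OF that Cg(2) Cg(1)] by auto
  have "S (\<lambda>y. a * f y + b * g y) x = integral\<^sup>L \<mu> (\<lambda>y. a * f y + b * g y) - integral\<^sup>L \<nu> (\<lambda>y. a * f y + b * g y)"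
    using S Bb_lin[OF assms(2,3)] by blast
  also have "\<dots> = a * (integral\<^sup>L \<mu> f - integral\<^sup>L \<nu> f) + b * (integral\<^sup>L \<mu> g - integral\<^sup>L \<nu> g)"
    using i[OF m(1) m(3)] i[OF m(2) m(4)] by (simp add: algebra_simps)
  also have "\<dots> = a * S f x + b * S g x" using S assms(2,3) by simp
  finally show ?thesis .
qed

lemma K_scale: "krep S C \<Longrightarrow> f \<in> Bb \<Longrightarrow> S (\<lambda>y. a * f y) x = a * S f x"
  using K_lin[of S C f f a 0 x] by simp

lemma K_diff: "krep S C \<Longrightarrow> f \<in> Bb \<Longrightarrow> g \<in> Bb \<Longrightarrow> S (\<lambda>y. f y - g y) x = S f x - S g x"
  using K_lin[of S C f g 1 "-1" x] by simp

lemma K_add: "krep S C \<Longrightarrow> f \<in> Bb \<Longrightarrow> g \<in> Bb \<Longrightarrow> S (\<lambda>y. f y + g y) x = S f x + S g x"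
  using K_lin[of S C f g 1 1 x] by simp

lemma K_bound:
  assumes "krep S C" "f \<in> Bb" "\<And>y. \<bar>f y\<bar> \<le> B"
  shows "\<bar>S f x\<bar> \<le> C * B"
proof -
  obtain \<mu> \<nu> where m: "finite_measure \<mu>" "finite_measure \<nu>" "sets \<mu> = sets borel" "sets \<nu> = sets borel"
    and S: "\<forall>f\<in>Bb. S f x = integral\<^sup>L \<mu> f - integral\<^sup>L \<nu> f" and mC: "measure \<mu> UNIV + measure \<nu> UNIV \<le> C"
    using assms(1) unfolding krep_def by blast
  have fm: "f \<in> borel_measurable borel" using assms(2) unfolding Bb_def by blast
  have B0: "0 \<le> B" using assms(3)[of undefined] by linarith
  have "\<bar>S f x\<bar> \<le> \<bar>integral\<^sup>L \<mu> f\<bar> + \<bar>integral\<^sup>L \<nu> f\<bar>" using S assms(2) by simp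
  also have "\<dots> \<le> B * measure \<mu> UNIV + B * measure \<nu> UNIV"
    using fm_abs_int[OF m(1) m(3) fm assms(3)] fm_abs_int[OF m(2) m(4) fm assms(3)] by simp
  also have "\<dots> \<le> C * B" using mC B0 by (simp add: distrib_left[symmetric] mult.commute mult_left_mono)
  finally show ?thesis .
qed

lemma K_dct:
  assumes "krep S C" "\<And>n. F n \<in> Bb" "f \<in> Bb" "\<And>n y. \<bar>F n y\<bar> \<le> B" "\<And>y. (\<lambda>n. F n y) \<longlonglongrightarrow> f y"
  shows "(\<lambda>n. S (F n) x) \<longlonglongrightarrow> S f x"
proof -
  obtain \<mu> \<nu> where m: "finite_measure \<mu>" "finite_measure \<nu>" "sets \<mu> = sets borel" "sets \<nu> = sets borel"
    and S: "\<forall>f\<in>Bb. S f x = integral\<^sup>L \<mu> f - integral\<^sup>L \<nu> f"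
    using assms(1) unfolding krep_def by blast
  have Fm: "F n \<in> borel_measurable borel" for n using assms(2) unfolding Bb_def by blast
  have fm: "f \<in> borel_measurable borel" using assms(3) unfolding Bb_def by blast
  have "(\<lambda>n. integral\<^sup>L \<mu> (F n) - integral\<^sup>L \<nu> (F n)) \<longlonglongrightarrow> integral\<^sup>L \<mu> f - integral\<^sup>L \<nu> f"
    by (intro tendsto_diff fm_dct[where B=B] m Fm fm assms(4,5))+
  then show ?thesis using S assms(2,3) by simp
qed

lemma opn_le:
  assumes "krep S C" "f \<in> Bb" "\<And>y. \<bar>f y\<bar> \<le> 1"
  shows "\<bar>S f x\<bar> \<le> opn S"
proof -
  have bd: "bdd_above (range (\<lambda>x. \<bar>S g x\<bar>))" if "g \<in> Bb" "\<forall>y. \<bar>g y\<bar> \<le> 1" for g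
    using K_bound[OF assms(1) that(1), of 1] that(2) by (intro bdd_aboveI[where M=C]) auto
  have "\<bar>S f x\<bar> \<le> (SUP x. \<bar>S f x\<bar>)" using bd assms(2,3) by (intro cSUP_upper) auto
  also have "\<dots> \<le> opn S" unfolding opn_def
  proof (rule cSUP_upper)
    show "f \<in> {f \<in> Bb. \<forall>x. \<bar>f x\<bar> \<le> 1}" using assms(2,3) by auto
    show "bdd_above ((\<lambda>f. SUP x. \<bar>S f x\<bar>) ` {f \<in> Bb. \<forall>x. \<bar>f x\<bar> \<le> 1})"
    proof (intro bdd_aboveI[where M=C])
      fix s assume "s \<in> (\<lambda>f. SUP x. \<bar>S f x\<bar>) ` {f \<in> Bb. \<forall>x. \<bar>f x\<bar> \<le> 1}"
      then obtain g where g: "g \<in> Bb" "\<forall>y. \<bar>g y\<bar> \<le> 1" and s: "s = (SUP x. \<bar>S g x\<bar>)" by blast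
      show "s \<le> C" unfolding s using K_bound[OF assms(1) g(1), of 1] g(2) by (intro cSUP_least) auto
    qed
  qed
  finally show ?thesis .
qed

lemma opn_le2:
  assumes "krep S C" "f \<in> Bb" "\<And>y. \<bar>f y\<bar> \<le> B"
  shows "\<bar>S f x\<bar> \<le> opn S * B"
proof (cases "B = 0")
  case True
  then have "f = (\<lambda>y. 0 * f y)" using assms(3) by (auto simp: fun_eq_iff)
  then have "S f x = 0 * S f x" using K_scale[OF assms(1,2), of 0 x] by metis
  then show ?thesis using True by simp
next
  case False
  have B0: "0 < B" using False assms(3)[of undefined] by linarith
  have g: "(\<lambda>y. (1/B) * f y) \<in> Bb" using Bb_scale[OF assms(2)] .
  have "\<bar>(1/B) * f y\<bar> \<le> 1" for y using assms(3)[of y] B0 by (simp add: abs_mult)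
  then have "\<bar>S (\<lambda>y. (1/B) * f y) x\<bar> \<le> opn S" using opn_le[OF assms(1) g] by blast
  moreover have "S (\<lambda>y. (1/B) * f y) x = (1/B) * S f x" using K_scale[OF assms(1,2)] .
  ultimately have "\<bar>(1/B) * S f x\<bar> \<le> opn S" by simp
  then show ?thesis using B0 by (simp add: abs_mult field_simps)
qed


lemma exp_int_ge:
  fixes a c :: real
  assumes a: "0 < a"
  shows "integrable lborel (\<lambda>t. indicator {c..} t * exp (- a * t))"
    "integral\<^sup>L lborel (\<lambda>t. indicator {c..} t * exp (- a * t)) = exp (- a * c) / a"
proof -
  have hi: "((\<lambda>x::real. exp (-a*x)) has_integral exp (-a*c)/a) {c..}"
    using has_integral_exp_minus_to_infinity[OF a] .
  have nn: "(\<integral>\<^sup>+x. ennreal (indicator {c..} x * exp (- a * x)) \<partial>lborel) = ennreal (exp (-a*c)/a)"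
    using nn_integral_has_integral_lebesgue[OF _ hi] by simp
  have m: "(\<lambda>t. indicator {c..} t * exp (- a * t)) \<in> borel_measurable borel" by measurable
  show i: "integrable lborel (\<lambda>t. indicator {c..} t * exp (- a * t))"
    using nn m by (intro integrableI_nonneg) auto
  show "integral\<^sup>L lborel (\<lambda>t. indicator {c..} t * exp (- a * t)) = exp (- a * c) / a"
    using nn m a by (subst integral_eq_nn_integral) auto
qed

lemma ind_gt_ge_AE: "AE t in lborel. indicator {(c::real)<..} t * (f t::real) = indicator {c..} t * f t"
  using AE_lborel_singleton[of c] by eventually_elim (auto simp: indicator_def)

lemma exp_int_gt:
  fixes a c :: real
  assumes a: "0 < a"
  shows "integrable lborel (\<lambda>t. indicator {c<..} t * exp (- a * t))"
    "integral\<^sup>L lborel (\<lambda>t. indicator {c<..} t * exp (- a * t)) = exp (- a * c) / a"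
proof -
  have m: "(\<lambda>t. indicator {c<..} t * exp (- a * t)) \<in> borel_measurable lborel" by measurable
  have m2: "(\<lambda>t. indicator {c..} t * exp (- a * t)) \<in> borel_measurable lborel" by measurable
  have e1: "integrable lborel (\<lambda>t. indicator {c<..} t * exp (- a * t)) = integrable lborel (\<lambda>t. indicator {c..} t * exp (- a * t))"
    by (rule integrable_cong_AE[OF m m2 ind_gt_ge_AE])
  have e2: "integral\<^sup>L lborel (\<lambda>t. indicator {c<..} t * exp (- a * t)) = integral\<^sup>L lborel (\<lambda>t. indicator {c..} t * exp (- a * t))"
    by (rule integral_cong_AE[OF m m2 ind_gt_ge_AE])
  show "integrable lborel (\<lambda>t. indicator {c<..} t * exp (- a * t))"
    unfolding e1 by (rule exp_int_ge(1)[OF a])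
  show "integral\<^sup>L lborel (\<lambda>t. indicator {c<..} t * exp (- a * t)) = exp (- a * c) / a"
    unfolding e2 by (rule exp_int_ge(2)[OF a])
qed

locale SG =
  fixes T :: "real \<Rightarrow> ('a::polish_space \<Rightarrow> real) \<Rightarrow> ('a \<Rightarrow> real)" and M \<omega> lam :: real
  assumes sg: "kernel_semigroup T M \<omega>" and sf: "\<forall>t>0. strong_feller (T t)"
    and lam: "\<omega> < lam" "0 < lam"
begin

lemma Tk: "0 < t \<Longrightarrow> \<exists>C. krep (T t) C"
  using sg kernel_krep unfolding kernel_semigroup_def by blast

lemma T_Cb: "0 < t \<Longrightarrow> f \<in> Bb \<Longrightarrow> T t f \<in> Cb"
  using sf unfolding strong_feller_def by blast

lemma T_cont: "0 < t \<Longrightarrow> f \<in> Bb \<Longrightarrow> continuous_on UNIV (T t f)"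
  using T_Cb unfolding Cb_def by blast

lemma T_Bb: "0 < t \<Longrightarrow> f \<in> Bb \<Longrightarrow> T t f \<in> Bb"
  using T_Cb[of t f] unfolding Cb_def Bb_def by (auto intro: borel_measurable_continuous_onI)

lemma T_bd:
  assumes "0 < t" "f \<in> Bb" "\<And>y. \<bar>f y\<bar> \<le> B"
  shows "\<bar>T t f x\<bar> \<le> M * exp (\<omega> * t) * B"
proof -
  obtain C where C: "krep (T t) C" using Tk[OF assms(1)] by blast
  have B0: "0 \<le> B" using assms(3)[of undefined] by linarith
  have "\<bar>T t f x\<bar> \<le> opn (T t) * B" by (rule opn_le2[OF C assms(2,3)])
  also have "\<dots> \<le> M * exp (\<omega> * t) * B"
    using sg assms(1) B0 unfolding kernel_semigroup_def by (intro mult_right_mono) auto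
  finally show ?thesis .
qed

lemma T_lin: "0 < t \<Longrightarrow> f \<in> Bb \<Longrightarrow> g \<in> Bb \<Longrightarrow> T t (\<lambda>y. a * f y + b * g y) x = a * T t f x + b * T t g x"
  using Tk K_lin by blast

lemma T_scale: "0 < t \<Longrightarrow> f \<in> Bb \<Longrightarrow> T t (\<lambda>y. a * f y) x = a * T t f x"
  using Tk K_scale by blast

lemma T_diff: "0 < t \<Longrightarrow> f \<in> Bb \<Longrightarrow> g \<in> Bb \<Longrightarrow> T t (\<lambda>y. f y - g y) x = T t f x - T t g x"
  using Tk K_diff by blast

lemma T_dct: "0 < t \<Longrightarrow> (\<And>n. F n \<in> Bb) \<Longrightarrow> f \<in> Bb \<Longrightarrow> (\<And>n y. \<bar>F n y\<bar> \<le> B) \<Longrightarrow>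
   (\<And>y. (\<lambda>n. F n y) \<longlonglongrightarrow> f y) \<Longrightarrow> (\<lambda>n. T t (F n) x) \<longlonglongrightarrow> T t f x"
  using Tk K_dct by metis

lemma T_semi: "0 < t \<Longrightarrow> 0 < s \<Longrightarrow> f \<in> Bb \<Longrightarrow> T (t + s) f = T t (T s f)"
  using sg unfolding kernel_semigroup_def by blast

lemma Tz_meas:
  assumes "f \<in> Bb"
  shows "(\<lambda>p. if 0 < fst p then T (fst p) f (snd p) else 0) \<in> borel_measurable (borel :: (real \<times> 'a) measure)"
proof -
  have "(\<lambda>(t, x). T t f x) \<in> borel_measurable (restrict_space borel ({0<..} \<times> UNIV))"
    using sg assms unfolding kernel_semigroup_def by blast
  moreover have "({0<..} \<times> UNIV) \<inter> space borel \<in> sets (borel :: (real \<times> 'a) measure)"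
    by (auto intro!: borel_open open_Times)
  ultimately have "(\<lambda>p. if p \<in> {0<..} \<times> UNIV then (\<lambda>(t, x). T t f x) p else 0) \<in> borel_measurable (borel :: (real \<times> 'a) measure)"
    using measurable_restrict_space_iff[of "{0<..} \<times> UNIV" borel 0 borel "\<lambda>(t, x). T t f x"] by auto
  moreover have "(\<lambda>p. if p \<in> {0<..} \<times> UNIV then (\<lambda>(t, x). T t f x) p else 0) = (\<lambda>p. if 0 < fst p then T (fst p) f (snd p) else 0)"
    by (auto simp: fun_eq_iff split: prod.splits)
  ultimately show ?thesis by simp
qed

lemma Tz_sec:
  assumes "f \<in> Bb"
  shows "(\<lambda>t. if 0 < t then T t f x else 0) \<in> borel_measurable borel"
proof -
  have "(\<lambda>t::real. (t, x)) \<in> measurable borel (borel :: (real \<times> 'a) measure)"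
    by (intro borel_measurable_continuous_onI continuous_intros)
  from measurable_compose[OF this Tz_meas[OF assms]]
  have "(\<lambda>t. (\<lambda>p. if 0 < fst p then T (fst p) f (snd p) else 0) (t, x)) \<in> borel_measurable borel" .
  moreover have "(\<lambda>t. (\<lambda>p. if 0 < fst p then T (fst p) f (snd p) else 0) (t, x)) = (\<lambda>t. if 0 < t then T t f x else 0)"
    by (rule ext) (simp only: fst_conv snd_conv)
  ultimately show ?thesis by metis
qed

lemma R_eq: "laplace T lam f x = integral\<^sup>L lborel (\<lambda>t. indicator {0<..} t * (exp (- lam * t) * T t f x))"
  unfolding laplace_def set_lebesgue_integral_def by simp

lemma R_meas:
  assumes "f \<in> Bb"
  shows "(\<lambda>t. indicator {0<..} t * (exp (- lam * t) * T t f x)) \<in> borel_measurable borel"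
proof -
  have "(\<lambda>t. exp (- lam * t) * (if 0 < t then T t f x else 0)) \<in> borel_measurable borel"
    using Tz_sec[OF assms] by measurable
  moreover have "(\<lambda>t. exp (- lam * t) * (if 0 < t then T t f x else 0)) = (\<lambda>t. indicator {0<..} t * (exp (- lam * t) * T t f x))"
    by (auto simp: fun_eq_iff indicator_def)
  ultimately show ?thesis by simp
qed

lemma R_dom:
  assumes "f \<in> Bb" "\<And>y. \<bar>f y\<bar> \<le> B"
  shows "\<bar>indicator {0<..} t * (exp (- lam * t) * T t f x)\<bar> \<le> M * B * (indicator {0<..} t * exp (- (lam - \<omega>) * t))"
proof (cases "0 < t")
  case True
  have "\<bar>exp (- lam * t) * T t f x\<bar> = exp (- lam * t) * \<bar>T t f x\<bar>" by (simp add: abs_mult)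
  also have "\<dots> \<le> exp (- lam * t) * (M * exp (\<omega> * t) * B)"
    using T_bd[OF True assms] by (intro mult_left_mono) auto
  also have "\<dots> = M * B * exp (- (lam - \<omega>) * t)" by (simp add: algebra_simps exp_add[symmetric])
  finally show ?thesis using True by simp
next
  case False
  have B0: "0 \<le> B" using assms(2)[of undefined] by linarith
  show ?thesis using False by simp
qed

end


context SG begin

abbreviation "R \<equiv> laplace T lam"

lemma dom_int: "integrable lborel (\<lambda>t. c * (indicator {0<..} t * exp (- (lam - \<omega>) * t)))"
  using exp_int_gt(1)[of "lam - \<omega>" 0] lam by (intro integrable_mult_right) auto

lemma dom_integral: "integral\<^sup>L lborel (\<lambda>t. c * (indicator {0<..} t * exp (- (lam - \<omega>) * t))) = c / (lam - \<omega>)"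
  using exp_int_gt(2)[of "lam - \<omega>" 0] lam by simp

lemma R_int:
  assumes "f \<in> Bb"
  shows "integrable lborel (\<lambda>t. indicator {0<..} t * (exp (- lam * t) * T t f x))"
proof -
  obtain B where B: "\<And>y. \<bar>f y\<bar> \<le> B" using assms unfolding Bb_def by blast
  show ?thesis
  proof (rule Bochner_Integration.integrable_bound[OF dom_int[of "M * B"]])
    show "(\<lambda>t. indicator {0<..} t * (exp (- lam * t) * T t f x)) \<in> borel_measurable lborel"
      using R_meas[OF assms] by simp
    show "AE t in lborel. norm (indicator {0<..} t * (exp (- lam * t) * T t f x)) \<le> norm (M * B * (indicator {0<..} t * exp (- (lam - \<omega>) * t)))"
      using R_dom[OF assms B] by (auto intro: order_trans[OF _ abs_ge_self])
  qed
qed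

lemma R_bd:
  assumes "f \<in> Bb" "\<And>y. \<bar>f y\<bar> \<le> B"
  shows "\<bar>R f x\<bar> \<le> M * B / (lam - \<omega>)"
proof -
  have "\<bar>R f x\<bar> \<le> integral\<^sup>L lborel (\<lambda>t. \<bar>indicator {0<..} t * (exp (- lam * t) * T t f x)\<bar>)"
    unfolding R_eq by (rule integral_abs_bound)
  also have "\<dots> \<le> integral\<^sup>L lborel (\<lambda>t. M * B * (indicator {0<..} t * exp (- (lam - \<omega>) * t)))"
    using R_int[OF assms(1)] dom_int R_dom[OF assms] by (intro integral_mono) auto
  also have "\<dots> = M * B / (lam - \<omega>)" by (rule dom_integral)
  finally show ?thesis .
qed

lemma R_lin:
  assumes "f \<in> Bb" "g \<in> Bb"
  shows "R (\<lambda>y. a * f y + b * g y) x = a * R f x + b * R g x"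
proof -
  have "R (\<lambda>y. a * f y + b * g y) x = integral\<^sup>L lborel (\<lambda>t. a * (indicator {0<..} t * (exp (- lam * t) * T t f x))
      + b * (indicator {0<..} t * (exp (- lam * t) * T t g x)))"
    unfolding R_eq
  proof (rule Bochner_Integration.integral_cong[OF refl])
    fix t :: real assume "t \<in> space lborel" show "indicator {0<..} t * (exp (- lam * t) * T t (\<lambda>y. a * f y + b * g y) x) =
      a * (indicator {0<..} t * (exp (- lam * t) * T t f x)) + b * (indicator {0<..} t * (exp (- lam * t) * T t g x))"
      using T_lin[OF _ assms, of t a b x] by (cases "0 < t") (auto simp: algebra_simps)
  qed
  also have "\<dots> = a * R f x + b * R g x"
    unfolding R_eq using R_int[OF assms(1)] R_int[OF assms(2)] by simp
  finally show ?thesis .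
qed

lemma R_scale: "f \<in> Bb \<Longrightarrow> R (\<lambda>y. a * f y) x = a * R f x"
  using R_lin[of f f a 0 x] by simp

lemma R_diff: "f \<in> Bb \<Longrightarrow> g \<in> Bb \<Longrightarrow> R (\<lambda>y. f y - g y) x = R f x - R g x"
  using R_lin[of f g 1 "-1" x] by simp

lemma R_dct:
  assumes F: "\<And>n. F n \<in> Bb" and f: "f \<in> Bb" and b: "\<And>n y. \<bar>F n y\<bar> \<le> B" and l: "\<And>y. (\<lambda>n. F n y) \<longlonglongrightarrow> f y"
  shows "(\<lambda>n. R (F n) x) \<longlonglongrightarrow> R f x"
  unfolding R_eq
proof (rule integral_dominated_convergence[OF _ _ dom_int[of "M * B"]])
  show "(\<lambda>t. indicator {0<..} t * (exp (- lam * t) * T t f x)) \<in> borel_measurable lborel"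
    using R_meas[OF f] by simp
  show "(\<lambda>t. indicator {0<..} t * (exp (- lam * t) * T t (F n) x)) \<in> borel_measurable lborel" for n
    using R_meas[OF F] by simp
  show "AE t in lborel. (\<lambda>n. indicator {0<..} t * (exp (- lam * t) * T t (F n) x)) \<longlonglongrightarrow> indicator {0<..} t * (exp (- lam * t) * T t f x)"
  proof (rule AE_I2)
    fix t show "(\<lambda>n. indicator {0<..} t * (exp (- lam * t) * T t (F n) x)) \<longlonglongrightarrow> indicator {0<..} t * (exp (- lam * t) * T t f x)"
    proof (cases "0 < t")
      case True
      then show ?thesis using T_dct[OF True F f b l] by (intro tendsto_mult tendsto_const) auto
    qed simp
  qed
  show "AE t in lborel. norm (indicator {0<..} t * (exp (- lam * t) * T t (F n) x)) \<le> M * B * (indicator {0<..} t * exp (- (lam - \<omega>) * t))" for n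
    using R_dom[OF F b] by auto
qed

lemma R_cont:
  assumes f: "f \<in> Bb"
  shows "continuous_on UNIV (R f)"
proof (rule continuous_on_sequentiallyI)
  fix u a assume u: "u \<longlonglongrightarrow> (a::'a)"
  obtain B where B: "\<And>y. \<bar>f y\<bar> \<le> B" using f unfolding Bb_def by blast
  show "(\<lambda>n. R f (u n)) \<longlonglongrightarrow> R f a"
    unfolding R_eq
  proof (rule integral_dominated_convergence[OF _ _ dom_int[of "M * B"]])
    show "(\<lambda>t. indicator {0<..} t * (exp (- lam * t) * T t f a)) \<in> borel_measurable lborel"
      using R_meas[OF f] by simp
    show "(\<lambda>t. indicator {0<..} t * (exp (- lam * t) * T t f (u n))) \<in> borel_measurable lborel" for n
      using R_meas[OF f] by simp
    show "AE t in lborel. (\<lambda>n. indicator {0<..} t * (exp (- lam * t) * T t f (u n))) \<longlonglongrightarrow> indicator {0<..} t * (exp (- lam * t) * T t f a)"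
    proof (rule AE_I2)
      fix t show "(\<lambda>n. indicator {0<..} t * (exp (- lam * t) * T t f (u n))) \<longlonglongrightarrow> indicator {0<..} t * (exp (- lam * t) * T t f a)"
      proof (cases "0 < t")
        case True
        have "(\<lambda>n. T t f (u n)) \<longlonglongrightarrow> T t f a"
          using continuous_on_tendsto_compose[OF T_cont[OF True f] u] by simp
        then show ?thesis by (intro tendsto_mult tendsto_const) auto
      qed simp
    qed
    show "AE t in lborel. norm (indicator {0<..} t * (exp (- lam * t) * T t f (u n))) \<le> M * B * (indicator {0<..} t * exp (- (lam - \<omega>) * t))" for n
      using R_dom[OF f B] by auto
  qed
qed

lemma R_Bb:
  assumes f: "f \<in> Bb"
  shows "R f \<in> Bb"
proof -
  obtain B where B: "\<And>y. \<bar>f y\<bar> \<le> B" using f unfolding Bb_def by blast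
  show ?thesis unfolding Bb_def
    using R_bd[OF f B] borel_measurable_continuous_onI[OF R_cont[OF f]] by blast
qed

end


lemma fub_one:
  fixes H :: "real \<Rightarrow> 'a::polish_space \<Rightarrow> real"
  assumes m: "finite_measure m" "sets m = sets borel"
    and Hm: "(\<lambda>p. H (fst p) (snd p)) \<in> borel_measurable (borel :: (real \<times> 'a) measure)"
    and Hb: "\<And>r y. \<bar>H r y\<bar> \<le> w r" and wi: "integrable lborel w"
    and Hs: "\<And>r. H r \<in> borel_measurable borel"
  shows "integral\<^sup>L m (\<lambda>y. integral\<^sup>L lborel (\<lambda>r. H r y)) = integral\<^sup>L lborel (\<lambda>r. integral\<^sup>L m (H r))"
    "integrable lborel (\<lambda>r. integral\<^sup>L m (H r))"
proof -
  interpret m: finite_measure m by fact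
  interpret P: pair_sigma_finite lborel m
    unfolding pair_sigma_finite_def using lborel.sigma_finite_measure_axioms m.sigma_finite_measure_axioms by blast
  have sP: "sets (lborel \<Otimes>\<^sub>M m) = sets (borel :: (real \<times> 'a) measure)"
  proof -
    have "sets (lborel \<Otimes>\<^sub>M m) = sets ((borel::real measure) \<Otimes>\<^sub>M (borel::'a measure))"
      by (rule sets_pair_measure_cong) (simp_all add: m(2))
    also have "((borel::real measure) \<Otimes>\<^sub>M (borel::'a measure)) = (borel :: (real \<times> 'a) measure)" by (rule borel_prod)
    finally show ?thesis .
  qed
  have Hm': "case_prod H \<in> borel_measurable (lborel \<Otimes>\<^sub>M m)"
  proof -
    have "(\<lambda>p. H (fst p) (snd p)) \<in> borel_measurable (lborel \<Otimes>\<^sub>M m)"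
      using measurable_cong_sets[OF sP refl] Hm by blast
    moreover have "(\<lambda>p. H (fst p) (snd p)) = case_prod H" by (auto simp: fun_eq_iff)
    ultimately show ?thesis by simp
  qed
  have sp: "space m = UNIV" using m(2) sets_eq_imp_space_eq by fastforce
  have w0: "0 \<le> w r" for r using Hb[of r undefined] by linarith
  have int2: "integrable m (\<lambda>y. H r y)" for r
  proof -
    have "(\<lambda>y. H r y) \<in> borel_measurable m"
      using measurable_Pair2[OF Hm', of r] by simp
    then show ?thesis using Hb by (intro m.integrable_const_bound[where B="w r"]) auto
  qed
  have integ: "integrable (lborel \<Otimes>\<^sub>M m) (case_prod H)"
  proof (rule P.Fubini_integrable)
    show "case_prod H \<in> borel_measurable (lborel \<Otimes>\<^sub>M m)" by (rule Hm')
    show "AE x in lborel. integrable m (\<lambda>y. case_prod H (x, y))" using int2 by simp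
    show "integrable lborel (\<lambda>x. LINT y|m. norm (case_prod H (x, y)))"
    proof (rule Bochner_Integration.integrable_bound[OF integrable_mult_right[OF wi, of "measure m UNIV"]])
      have "(\<lambda>p. norm (case_prod H p)) \<in> borel_measurable (lborel \<Otimes>\<^sub>M m)" using Hm' by measurable
      then have "case_prod (\<lambda>x y. norm (H x y)) \<in> borel_measurable (lborel \<Otimes>\<^sub>M m)"
        by (simp add: case_prod_beta')
      from m.borel_measurable_lebesgue_integral[OF this]
      show "(\<lambda>x. LINT y|m. norm (case_prod H (x, y))) \<in> borel_measurable lborel" by simp
      show "AE x in lborel. norm (LINT y|m. norm (case_prod H (x, y))) \<le> norm (measure m UNIV * w x)"
      proof (rule AE_I2)
        fix r
        have "\<bar>LINT y|m. \<bar>H r y\<bar>\<bar> \<le> w r * measure m UNIV"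
          using fm_abs_int[OF m, of "\<lambda>y. \<bar>H r y\<bar>" "w r"] Hb borel_measurable_abs[OF Hs[of r]]
          by simp
        then show "norm (LINT y|m. norm (case_prod H (r, y))) \<le> norm (measure m UNIV * w r)"
          using w0[of r] by (simp add: mult.commute)
      qed
    qed
  qed
  show "integral\<^sup>L m (\<lambda>y. integral\<^sup>L lborel (\<lambda>r. H r y)) = integral\<^sup>L lborel (\<lambda>r. integral\<^sup>L m (H r))"
    using P.Fubini_integral[of H] integ by simp
  show "integrable lborel (\<lambda>r. integral\<^sup>L m (H r))"
    using P.integrable_fst'[OF integ] by simp
qed

lemma K_fubini:
  fixes H :: "real \<Rightarrow> 'a::polish_space \<Rightarrow> real"
  assumes S: "krep S C"
    and Hm: "(\<lambda>p. H (fst p) (snd p)) \<in> borel_measurable (borel :: (real \<times> 'a) measure)"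
    and Hb: "\<And>r y. \<bar>H r y\<bar> \<le> w r" and wi: "integrable lborel w"
    and HB: "\<And>r. H r \<in> Bb" and IB: "(\<lambda>y. integral\<^sup>L lborel (\<lambda>r. H r y)) \<in> Bb"
  shows "S (\<lambda>y. integral\<^sup>L lborel (\<lambda>r. H r y)) x = integral\<^sup>L lborel (\<lambda>r. S (H r) x)"
proof -
  obtain \<mu> \<nu> where m: "finite_measure \<mu>" "finite_measure \<nu>" "sets \<mu> = sets borel" "sets \<nu> = sets borel"
    and Sx: "\<forall>f\<in>Bb. S f x = integral\<^sup>L \<mu> f - integral\<^sup>L \<nu> f"
    using S unfolding krep_def by blast
  have Hs: "H r \<in> borel_measurable borel" for r using HB unfolding Bb_def by blast
  note f1 = fub_one[OF m(1) m(3) Hm Hb wi Hs] and f2 = fub_one[OF m(2) m(4) Hm Hb wi Hs]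
  have "S (\<lambda>y. integral\<^sup>L lborel (\<lambda>r. H r y)) x
      = integral\<^sup>L lborel (\<lambda>r. integral\<^sup>L \<mu> (H r)) - integral\<^sup>L lborel (\<lambda>r. integral\<^sup>L \<nu> (H r))"
    using Sx IB f1(1) f2(1) by simp
  also have "\<dots> = integral\<^sup>L lborel (\<lambda>r. integral\<^sup>L \<mu> (H r) - integral\<^sup>L \<nu> (H r))"
    using f1(2) f2(2) by simp
  also have "\<dots> = integral\<^sup>L lborel (\<lambda>r. S (H r) x)"
    using Sx HB by simp
  finally show ?thesis .
qed


lemma fub2:
  fixes h :: "real \<Rightarrow> real \<Rightarrow> real"
  assumes hm: "(\<lambda>p. h (fst p) (snd p)) \<in> borel_measurable (borel :: (real \<times> real) measure)"
    and hb: "\<And>s r. \<bar>h s r\<bar> \<le> a s * b r"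
    and ai: "integrable lborel a" and bi: "integrable lborel b"
    and a0: "\<And>s. 0 \<le> a s" and b0: "\<And>r. 0 \<le> b r"
  shows "integral\<^sup>L lborel (\<lambda>s. integral\<^sup>L lborel (\<lambda>r. h s r)) = integral\<^sup>L lborel (\<lambda>r. integral\<^sup>L lborel (\<lambda>s. h s r))"
    "integrable lborel (\<lambda>s. integral\<^sup>L lborel (\<lambda>r. h s r))"
    "integrable lborel (\<lambda>r. integral\<^sup>L lborel (\<lambda>s. h s r))"
proof -
  have sP: "sets (lborel \<Otimes>\<^sub>M lborel) = sets (borel :: (real \<times> real) measure)"
  proof -
    have "sets (lborel \<Otimes>\<^sub>M lborel) = sets ((borel::real measure) \<Otimes>\<^sub>M (borel::real measure))"
      by (rule sets_pair_measure_cong) simp_all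
    also have "((borel::real measure) \<Otimes>\<^sub>M (borel::real measure)) = (borel :: (real \<times> real) measure)" by (rule borel_prod)
    finally show ?thesis .
  qed
  have hm': "case_prod h \<in> borel_measurable (lborel \<Otimes>\<^sub>M lborel)"
  proof -
    have "(\<lambda>p. h (fst p) (snd p)) \<in> borel_measurable (lborel \<Otimes>\<^sub>M lborel)"
      using measurable_cong_sets[OF sP refl] hm by blast
    moreover have "(\<lambda>p. h (fst p) (snd p)) = case_prod h" by (auto simp: fun_eq_iff)
    ultimately show ?thesis by simp
  qed
  have am: "a \<in> borel_measurable borel" and bm: "b \<in> borel_measurable borel"
    using ai bi by (auto dest: borel_measurable_integrable)
  have abi: "integrable (lborel \<Otimes>\<^sub>M lborel) (\<lambda>p. a (fst p) * b (snd p))"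
  proof (rule lborel_pair.Fubini_integrable)
    show "(\<lambda>p. a (fst p) * b (snd p)) \<in> borel_measurable (lborel \<Otimes>\<^sub>M lborel)" using am bm by measurable
    show "integrable lborel (\<lambda>x. LINT y|lborel. norm (a (fst (x, y)) * b (snd (x, y))))"
      using a0 b0 ai by (simp add: abs_mult)
    show "AE x in lborel. integrable lborel (\<lambda>y. a (fst (x, y)) * b (snd (x, y)))"
      using bi by simp
  qed
  have hi: "integrable (lborel \<Otimes>\<^sub>M lborel) (case_prod h)"
  proof (rule Bochner_Integration.integrable_bound[OF abi hm'])
    show "AE x in lborel \<Otimes>\<^sub>M lborel. norm (case_prod h x) \<le> norm (a (fst x) * b (snd x))"
      using hb a0 b0 by (auto simp: split_beta abs_mult intro: order_trans[OF _ abs_ge_self])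
  qed
  show "integral\<^sup>L lborel (\<lambda>s. integral\<^sup>L lborel (\<lambda>r. h s r)) = integral\<^sup>L lborel (\<lambda>r. integral\<^sup>L lborel (\<lambda>s. h s r))"
    using lborel_pair.Fubini_integral[of h] hi by simp
  show "integrable lborel (\<lambda>s. integral\<^sup>L lborel (\<lambda>r. h s r))"
    using lborel_pair.integrable_fst'[OF hi] by simp
  have hi2: "integrable (lborel \<Otimes>\<^sub>M lborel) (\<lambda>p. h (snd p) (fst p))"
  proof -
    have "(\<lambda>p. h (snd p) (fst p)) = (\<lambda>p. case_prod h (snd p, fst p))" by auto
    moreover have "integrable (lborel \<Otimes>\<^sub>M lborel) (\<lambda>p. case_prod h (snd p, fst p))"
      using lborel_pair.integrable_product_swap[OF hi] by (simp add: case_prod_beta')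
    ultimately show ?thesis by simp
  qed
  show "integrable lborel (\<lambda>r. integral\<^sup>L lborel (\<lambda>s. h s r))"
    using lborel_pair.integrable_fst'[OF hi2] by simp
qed

lemma shift_int:
  fixes F :: "real \<Rightarrow> real"
  shows "integral\<^sup>L lborel (\<lambda>r. indicator {0<..} r * (exp (- lam * r) * F (s + r)))
    = exp (lam * s) * integral\<^sup>L lborel (\<lambda>r. indicator {s<..} r * (exp (- lam * r) * F r))"
proof -
  have "integral\<^sup>L lborel (\<lambda>r. indicator {s<..} r * (exp (- lam * r) * F r))
     = integral\<^sup>L lborel (\<lambda>x. indicator {s<..} (s + 1 * x) * (exp (- lam * (s + 1 * x)) * F (s + 1 * x)))"
    using lborel_integral_real_affine[of 1 "\<lambda>r. indicator {s<..} r * (exp (- lam * r) * F r)" s] by simp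
  also have "\<dots> = integral\<^sup>L lborel (\<lambda>x. exp (- lam * s) * (indicator {0<..} x * (exp (- lam * x) * F (s + x))))"
    by (rule Bochner_Integration.integral_cong) (auto simp: indicator_def algebra_simps exp_add[symmetric])
  also have "\<dots> = exp (- lam * s) * integral\<^sup>L lborel (\<lambda>x. indicator {0<..} x * (exp (- lam * x) * F (s + x)))"
    by simp
  finally show ?thesis by (simp add: exp_minus field_simps)
qed

lemma Jcomp:
  fixes lam r t :: real
  assumes "0 < r" "0 < t"
  shows "integral\<^sup>L lborel (\<lambda>s. indicator {0<..t} s * lam * exp (lam * s) * (if s < r then 1 else 0)) = exp (lam * min r t) - 1"
proof -
  let ?m = "min r t"
  have AE: "AE s in lborel. indicator {0<..t} s * lam * exp (lam * s) * (if s < r then 1 else 0) = indicator {0..?m} s * (lam * exp (lam * s))"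
    using AE_lborel_singleton[of 0] AE_lborel_singleton[of r]
    by eventually_elim (auto simp: indicator_def)
  have m1: "(\<lambda>s. indicator {0<..t} s * lam * exp (lam * s) * (if s < r then 1 else 0)) \<in> borel_measurable lborel"
    by measurable
  have m2: "(\<lambda>s::real. indicator {0..?m} s * (lam * exp (lam * s))) \<in> borel_measurable lborel"
    by measurable
  have "integral\<^sup>L lborel (\<lambda>s. indicator {0<..t} s * lam * exp (lam * s) * (if s < r then 1 else 0))
      = integral\<^sup>L lborel (\<lambda>s. indicator {0..?m} s * (lam * exp (lam * s)))"
    by (rule integral_cong_AE[OF m1 m2 AE])
  also have "\<dots> = integral\<^sup>L lborel (\<lambda>s. indicator {0..?m} s *\<^sub>R (lam * exp (lam * s)))"
    by simp
  also have "\<dots> = exp (lam * ?m) - exp (lam * 0)"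
  proof (rule integral_FTC_atLeastAtMost)
    show "0 \<le> ?m" using assms by simp
    show "((\<lambda>x. exp (lam * x)) has_vector_derivative lam * exp (lam * x)) (at x within {0..?m})" for x
      by (auto intro!: derivative_eq_intros simp flip: has_real_derivative_iff_has_vector_derivative)
    show "continuous_on {0..?m} (\<lambda>x. lam * exp (lam * x))" by (intro continuous_intros)
  qed
  finally show ?thesis by simp
qed

lemma ind_const_int: "integrable lborel (\<lambda>s::real. indicator {a..b} s * (C::real))"
proof -
  have "integrable lborel (indicator {a..b} :: real \<Rightarrow> real)"
    by (rule integrable_real_indicator) (auto simp: emeasure_lborel_Icc_eq)
  then show ?thesis by (rule integrable_mult_left)
qed

lemma G1_1D:
  fixes F :: "real \<Rightarrow> real" and lam c K t :: real
  assumes Fm[measurable]: "F \<in> borel_measurable borel" and F0: "\<And>r. r \<le> 0 \<Longrightarrow> F r = 0"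
    and Fb: "\<And>r. \<bar>F r\<bar> \<le> K * exp (c * r)" and c: "0 \<le> c" "c < lam" and t: "0 < t"
  defines "\<Phi> \<equiv> \<lambda>s. integral\<^sup>L lborel (\<lambda>r. indicator {0<..} r * (exp (- lam * r) * F (s + r)))"
  shows "\<Phi> t - \<Phi> 0 = integral\<^sup>L lborel (\<lambda>s. indicator {0<..t} s * (lam * \<Phi> s - F s))"
proof -
  have lam0: "0 < lam" using c by simp
  have "\<bar>F 0\<bar> \<le> K" using Fb[of 0] by simp
  then have K0: "0 \<le> K" using abs_ge_zero[of "F 0"] by linarith
  define G where "G r = exp (- lam * r) * F r" for r
  have Gm[measurable]: "G \<in> borel_measurable borel" unfolding G_def by measurable
  have G0: "r \<le> 0 \<Longrightarrow> G r = 0" for r using F0 by (simp add: G_def)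
  define g0 where "g0 r = K * (indicator {0<..} r * exp (- (lam - c) * r))" for r
  have g0i: "integrable lborel g0" unfolding g0_def using exp_int_gt(1)[of "lam - c" 0] c by simp
  have g00: "0 \<le> g0 r" for r using K0 by (simp add: g0_def)
  have Gb: "\<bar>G r\<bar> \<le> g0 r" for r
  proof (cases "0 < r")
    case True
    have "\<bar>G r\<bar> = exp (- lam * r) * \<bar>F r\<bar>" by (simp add: G_def abs_mult)
    also have "\<dots> \<le> exp (- lam * r) * (K * exp (c * r))" using Fb[of r] by (intro mult_left_mono) auto
    also have "\<dots> = g0 r" using True by (simp add: g0_def algebra_simps exp_add[symmetric])
    finally show ?thesis .
  qed (use G0 g00 in auto)
  define \<Psi> where "\<Psi> s = integral\<^sup>L lborel (\<lambda>r. indicator {s<..} r * G r)" for s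
  have \<Psi>i: "integrable lborel (\<lambda>r. indicator {s<..} r * G r)" for s
    by (rule Bochner_Integration.integrable_bound[OF g0i]) (auto simp: indicator_def intro: order_trans[OF Gb abs_ge_self])
  have \<Phi>\<Psi>: "\<Phi> s = exp (lam * s) * \<Psi> s" for s
    unfolding \<Phi>_def \<Psi>_def G_def by (rule shift_int)
  define h where "h s r = indicator {0<..t} s * lam * exp (lam * s) * (if s < r then 1 else 0) * G r" for s r
  define a where "a s = indicator {0..t} s * (lam * exp (lam * t))" for s
  have "(\<lambda>p. h (fst p) (snd p)) \<in> borel_measurable ((borel :: real measure) \<Otimes>\<^sub>M (borel :: real measure))"
    unfolding h_def by measurable
  then have hm: "(\<lambda>p. h (fst p) (snd p)) \<in> borel_measurable (borel :: (real \<times> real) measure)"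
    by (simp only: borel_prod)
  have hb: "\<bar>h s r\<bar> \<le> a s * g0 r" for s r
  proof -
    have "\<bar>indicator {0<..t} s * lam * exp (lam * s) * (if s < r then 1 else 0)\<bar> \<le> a s"
      using lam0 by (auto simp: a_def indicator_def)
    then show ?thesis unfolding h_def using Gb[of r] g00[of r]
      by (simp only: abs_mult[of _ "G r"]) (intro mult_mono, auto simp: a_def)
  qed
  have ai: "integrable lborel a" unfolding a_def by (rule ind_const_int)
  have a0: "0 \<le> a s" for s using lam0 by (simp add: a_def)
  note FB = fub2[OF hm hb ai g0i a0 g00]
  have in_r: "integral\<^sup>L lborel (\<lambda>r. h s r) = indicator {0<..t} s * lam * \<Phi> s" for s
  proof -
    have "integral\<^sup>L lborel (\<lambda>r. h s r) = integral\<^sup>L lborel (\<lambda>r. (indicator {0<..t} s * lam * exp (lam * s)) * (indicator {s<..} r * G r))"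
      unfolding h_def by (rule Bochner_Integration.integral_cong) (auto simp: indicator_def)
    also have "\<dots> = indicator {0<..t} s * lam * exp (lam * s) * \<Psi> s" unfolding \<Psi>_def by simp
    finally show ?thesis using \<Phi>\<Psi>[of s] by simp
  qed
  define Q where "Q r = indicator {0<..t} r * F r + exp (lam * t) * (indicator {t<..} r * G r) - indicator {0<..} r * G r" for r
  have in_s: "integral\<^sup>L lborel (\<lambda>s. h s r) = Q r" for r
  proof (cases "0 < r")
    case True
    have "integral\<^sup>L lborel (\<lambda>s. h s r) = integral\<^sup>L lborel (\<lambda>s. indicator {0<..t} s * lam * exp (lam * s) * (if s < r then 1 else 0)) * G r"
      unfolding h_def by simp
    also have "\<dots> = (exp (lam * min r t) - 1) * G r" using Jcomp[OF True t] by simp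
    also have "\<dots> = Q r"
    proof (cases "r \<le> t")
      case True
      then show ?thesis using \<open>0 < r\<close> by (simp add: Q_def G_def min_def algebra_simps exp_add[symmetric])
    next
      case False
      then show ?thesis using \<open>0 < r\<close> by (simp add: Q_def min_def algebra_simps)
    qed
    finally show ?thesis .
  next
    case False
    then show ?thesis using G0[of r] F0[of r] by (simp add: h_def Q_def)
  qed
  have iF: "integrable lborel (\<lambda>r. indicator {0<..t} r * F r)"
  proof (rule Bochner_Integration.integrable_bound[OF ind_const_int[of 0 t "K * exp (c * t)"]])
    show "(\<lambda>r. indicator {0<..t} r * F r) \<in> borel_measurable lborel" by measurable
    show "AE x in lborel. norm (indicator {0<..t} x * F x) \<le> norm (indicator {0..t} x * (K * exp (c * t)))"
    proof (rule AE_I2)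
      fix x :: real
      show "norm (indicator {0<..t} x * F x) \<le> norm (indicator {0..t} x * (K * exp (c * t)))"
      proof (cases "0 < x \<and> x \<le> t")
        case True
        have "\<bar>F x\<bar> \<le> K * exp (c * t)"
        proof -
          have "c * x \<le> c * t" using True c(1) by (intro mult_left_mono) auto
          then have "K * exp (c * x) \<le> K * exp (c * t)" using K0 by (intro mult_left_mono) auto
          then show ?thesis using Fb[of x] by linarith
        qed
        then show ?thesis using True K0 by (simp add: indicator_def)
      qed (auto simp: indicator_def)
    qed
  qed
  have IQ: "integral\<^sup>L lborel Q = integral\<^sup>L lborel (\<lambda>r. indicator {0<..t} r * F r) + exp (lam * t) * \<Psi> t - \<Psi> 0"
    unfolding Q_def \<Psi>_def using iF \<Psi>i[of t] \<Psi>i[of 0] by simp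
  have eq1: "integral\<^sup>L lborel (\<lambda>s. indicator {0<..t} s * lam * \<Phi> s)
      = integral\<^sup>L lborel (\<lambda>r. indicator {0<..t} r * F r) + \<Phi> t - \<Phi> 0"
    using FB(1) in_r in_s IQ \<Phi>\<Psi>[of t] \<Phi>\<Psi>[of 0] by simp
  have i1: "integrable lborel (\<lambda>s. indicator {0<..t} s * lam * \<Phi> s)"
    using FB(2) in_r by simp
  have "integral\<^sup>L lborel (\<lambda>s. indicator {0<..t} s * (lam * \<Phi> s - F s))
      = integral\<^sup>L lborel (\<lambda>s. indicator {0<..t} s * lam * \<Phi> s - indicator {0<..t} s * F s)"
    by (simp add: algebra_simps)
  also have "\<dots> = integral\<^sup>L lborel (\<lambda>s. indicator {0<..t} s * lam * \<Phi> s) - integral\<^sup>L lborel (\<lambda>s. indicator {0<..t} s * F s)"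
    using i1 iF by (rule Bochner_Integration.integral_diff)
  finally show ?thesis using eq1 by simp
qed

lemma G2_1D:
  fixes W G :: "real \<Rightarrow> real" and w0 lam c K :: real
  assumes Wm[measurable]: "W \<in> borel_measurable borel" and Gm[measurable]: "G \<in> borel_measurable borel"
    and Gb: "\<And>s. 0 < s \<Longrightarrow> \<bar>G s\<bar> \<le> K * exp (c * s)"
    and c: "0 \<le> c" "c + 1 < lam"
    and eq: "\<And>t. 0 < t \<Longrightarrow> W t - w0 = integral\<^sup>L lborel (\<lambda>s. indicator {0<..t} s * G s)"
  shows "lam * integral\<^sup>L lborel (\<lambda>t. indicator {0<..} t * (exp (- lam * t) * W t))
    = w0 + integral\<^sup>L lborel (\<lambda>s. indicator {0<..} s * (exp (- lam * s) * G s))"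
proof -
  have lam0: "0 < lam" using c by simp
  have K0: "0 \<le> K" using Gb[of 1] abs_ge_zero[of "G 1"] by (smt (verit) exp_gt_zero zero_le_mult_iff)
  define h where "h t s = indicator {0<..} t * exp (- lam * t) * (indicator {0<..} s * (if s \<le> t then 1 else 0) * G s)" for t s
  define a where "a t = K * (indicator {0<..} t * exp (- (lam - c - 1) * t))" for t
  define b where "b s = indicator {0<..} s * exp (- 1 * s)" for s :: real
  have "(\<lambda>p. h (fst p) (snd p)) \<in> borel_measurable ((borel :: real measure) \<Otimes>\<^sub>M (borel :: real measure))"
    unfolding h_def by measurable
  then have hm: "(\<lambda>p. h (fst p) (snd p)) \<in> borel_measurable (borel :: (real \<times> real) measure)"
    by (simp only: borel_prod)
  have hb: "\<bar>h t s\<bar> \<le> a t * b s" for t s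
  proof (cases "0 < s \<and> s \<le> t")
    case True
    then have t0: "0 < t" by simp
    have "\<bar>h t s\<bar> = exp (- lam * t) * \<bar>G s\<bar>" using True by (simp add: h_def abs_mult)
    also have "\<dots> \<le> exp (- lam * t) * (K * exp (c * s))" using Gb[of s] True by (intro mult_left_mono) auto
    also have "\<dots> = K * exp (- lam * t + c * s)" by (simp only: exp_add mult.commute mult.left_commute)
    also have "\<dots> \<le> K * exp (- (lam - c - 1) * t + - 1 * s)"
    proof -
      have "c * s \<le> c * t" using True c(1) by (intro mult_left_mono) auto
      then have "- lam * t + c * s \<le> - (lam - c - 1) * t + - 1 * s" using True by (simp add: algebra_simps)
      then show ?thesis using K0 by (intro mult_left_mono) auto
    qed
    also have "\<dots> = K * (exp (- (lam - c - 1) * t) * exp (- 1 * s))" by (simp only: exp_add)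
    also have "\<dots> = a t * b s" using True t0 by (simp add: a_def b_def)
    finally show ?thesis .
  next
    case False
    then have "h t s = 0" by (auto simp: h_def indicator_def)
    moreover have "0 \<le> a t * b s" using K0 by (simp add: a_def b_def)
    ultimately show ?thesis by simp
  qed
  have ai: "integrable lborel a" unfolding a_def using exp_int_gt(1)[of "lam - c - 1" 0] c by simp
  have bi: "integrable lborel b" unfolding b_def using exp_int_gt(1)[of 1 0] by simp
  have a0: "0 \<le> a t" for t using K0 by (simp add: a_def)
  have b0: "0 \<le> b s" for s by (simp add: b_def)
  note FB = fub2[OF hm hb ai bi a0 b0]
  have in_s: "integral\<^sup>L lborel (\<lambda>s. h t s) = indicator {0<..} t * (exp (- lam * t) * (W t - w0))" for t
  proof (cases "0 < t")
    case True
    have "integral\<^sup>L lborel (\<lambda>s. h t s) = indicator {0<..} t * exp (- lam * t) * integral\<^sup>L lborel (\<lambda>s. indicator {0<..t} s * G s)"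
      unfolding h_def by (subst integral_mult_right_zero[symmetric]) (rule Bochner_Integration.integral_cong, auto simp: indicator_def)
    then show ?thesis using eq[OF True] by simp
  next
    case False then show ?thesis by (simp add: h_def)
  qed
  have in_t: "integral\<^sup>L lborel (\<lambda>t. h t s) = indicator {0<..} s * (exp (- lam * s) * G s) / lam" for s
  proof (cases "0 < s")
    case True
    have "integral\<^sup>L lborel (\<lambda>t. h t s) = integral\<^sup>L lborel (\<lambda>t. indicator {s..} t * exp (- lam * t)) * G s"
      unfolding h_def using True
      by (subst integral_mult_left_zero[symmetric]) (rule Bochner_Integration.integral_cong, auto simp: indicator_def)
    also have "\<dots> = exp (- lam * s) / lam * G s" using exp_int_ge(2)[OF lam0, of s] by simp
    finally show ?thesis using True by simp
  next
    case False then show ?thesis by (simp add: h_def)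
  qed
  have iW: "integrable lborel (\<lambda>t. indicator {0<..} t * (exp (- lam * t) * (W t - w0)))"
    using FB(2) in_s by simp
  have iE: "integrable lborel (\<lambda>t. w0 * (indicator {0<..} t * exp (- lam * t)))"
    using exp_int_gt(1)[OF lam0, of 0] by simp
  have "integral\<^sup>L lborel (\<lambda>t. indicator {0<..} t * (exp (- lam * t) * W t))
     = integral\<^sup>L lborel (\<lambda>t. indicator {0<..} t * (exp (- lam * t) * (W t - w0)) + w0 * (indicator {0<..} t * exp (- lam * t)))"
    by (rule Bochner_Integration.integral_cong) (auto simp: algebra_simps)
  also have "\<dots> = integral\<^sup>L lborel (\<lambda>t. indicator {0<..} t * (exp (- lam * t) * (W t - w0))) + w0 / lam"
    using iW iE exp_int_gt(2)[OF lam0, of 0] by simp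
  also have "integral\<^sup>L lborel (\<lambda>t. indicator {0<..} t * (exp (- lam * t) * (W t - w0)))
     = integral\<^sup>L lborel (\<lambda>s. indicator {0<..} s * (exp (- lam * s) * G s)) / lam"
    using FB(1) in_s in_t by simp
  finally show ?thesis using lam0 by (simp add: field_simps)
qed


context SG begin

lemma M_nonneg: "0 \<le> M"
proof -
  have "\<bar>T 1 (\<lambda>y. 1) undefined\<bar> \<le> M * exp (\<omega> * 1) * 1" by (rule T_bd) (auto intro: Bb_const)
  then have "0 \<le> M * exp \<omega>" using abs_ge_zero[of "T 1 (\<lambda>y. 1) undefined"] by simp
  then show ?thesis by (simp add: zero_le_mult_iff)
qed

lemma Tz_bd:
  assumes "f \<in> Bb" "\<And>y. \<bar>f y\<bar> \<le> B"
  shows "\<bar>(if 0 < r then T r f x else 0)\<bar> \<le> (M * B) * exp (max \<omega> 0 * r)"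
proof -
  have B0: "0 \<le> B" using assms(2)[of undefined] by linarith
  have MB: "0 \<le> M * B" using M_nonneg B0 by simp
  show ?thesis
  proof (cases "0 < r")
    case True
    have "\<bar>T r f x\<bar> \<le> M * exp (\<omega> * r) * B" by (rule T_bd[OF True assms])
    also have "\<dots> \<le> (M * B) * exp (max \<omega> 0 * r)"
    proof -
      have "\<omega> * r \<le> max \<omega> 0 * r" using True by (intro mult_right_mono) auto
      then have "exp (\<omega> * r) \<le> exp (max \<omega> 0 * r)" by simp
      then have "(M * B) * exp (\<omega> * r) \<le> (M * B) * exp (max \<omega> 0 * r)" using MB by (rule mult_left_mono)
      moreover have "M * exp (\<omega> * r) * B = (M * B) * exp (\<omega> * r)" by simp
      ultimately show ?thesis by (simp only:)
    qed
    finally show ?thesis using True by simp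
  qed (use MB in simp)
qed

lemma TR:
  assumes s: "0 < s" and f: "f \<in> Bb"
  shows "T s (R f) x = integral\<^sup>L lborel (\<lambda>r. indicator {0<..} r * (exp (- lam * r) * (if 0 < s + r then T (s + r) f x else 0)))"
proof -
  obtain C where C: "krep (T s) C" using Tk[OF s] by blast
  obtain B where B: "\<And>y. \<bar>f y\<bar> \<le> B" using f unfolding Bb_def by blast
  define H where "H r y = indicator {0<..} r * (exp (- lam * r) * T r f y)" for r y
  have Hm: "(\<lambda>p. H (fst p) (snd p)) \<in> borel_measurable (borel :: (real \<times> 'a) measure)"
  proof -
    have c: "(\<lambda>p::real \<times> 'a. exp (- lam * fst p)) \<in> borel_measurable borel"
      by (intro borel_measurable_continuous_onI continuous_intros)
    have "(\<lambda>p. exp (- lam * fst p) * (if 0 < fst p then T (fst p) f (snd p) else 0)) \<in> borel_measurable (borel :: (real \<times> 'a) measure)"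
      by (rule borel_measurable_times[OF c Tz_meas[OF f]])
    moreover have "(\<lambda>p. exp (- lam * fst p) * (if 0 < fst p then T (fst p) f (snd p) else 0)) = (\<lambda>p. H (fst p) (snd p))"
      by (auto simp: fun_eq_iff H_def indicator_def)
    ultimately show ?thesis by simp
  qed
  have Hb: "\<bar>H r y\<bar> \<le> M * B * (indicator {0<..} r * exp (- (lam - \<omega>) * r))" for r y
    unfolding H_def by (rule R_dom[OF f B])
  have HB: "H r \<in> Bb" for r
  proof (cases "0 < r")
    case True
    then show ?thesis unfolding H_def using Bb_scale[OF T_Bb[OF True f]] by simp
  next
    case False
    then show ?thesis unfolding H_def using Bb_const[of 0] by simp
  qed
  have RH: "(\<lambda>y. integral\<^sup>L lborel (\<lambda>r. H r y)) = R f"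
    by (auto simp: fun_eq_iff H_def R_eq)
  have IB: "(\<lambda>y. integral\<^sup>L lborel (\<lambda>r. H r y)) \<in> Bb" unfolding RH by (rule R_Bb[OF f])
  have "T s (\<lambda>y. integral\<^sup>L lborel (\<lambda>r. H r y)) x = integral\<^sup>L lborel (\<lambda>r. T s (H r) x)"
    by (rule K_fubini[OF C Hm Hb dom_int HB IB])
  also have "\<dots> = integral\<^sup>L lborel (\<lambda>r. indicator {0<..} r * (exp (- lam * r) * (if 0 < s + r then T (s + r) f x else 0)))"
  proof (rule Bochner_Integration.integral_cong[OF refl])
    fix r :: real assume "r \<in> space lborel"
    show "T s (H r) x = indicator {0<..} r * (exp (- lam * r) * (if 0 < s + r then T (s + r) f x else 0))"
    proof (cases "0 < r")
      case True
      have "H r = (\<lambda>y. exp (- lam * r) * T r f y)" using True by (auto simp: H_def fun_eq_iff)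
      then have "T s (H r) x = T s (\<lambda>y. exp (- lam * r) * T r f y) x" by simp
      also have "\<dots> = exp (- lam * r) * T s (T r f) x" by (rule T_scale[OF s T_Bb[OF True f]])
      also have "T s (T r f) = T (s + r) f" using T_semi[OF s True f] by simp
      finally show ?thesis using True s by simp
    next
      case False
      have "H r = (\<lambda>y. 0 * f y)" using False by (auto simp: H_def fun_eq_iff)
      then have "T s (H r) x = T s (\<lambda>y. 0 * f y) x" by simp
      also have "\<dots> = 0 * T s f x" by (rule T_scale[OF s f])
      finally show ?thesis using False by simp
    qed
  qed
  finally show ?thesis unfolding RH .
qed

lemma G1:
  assumes f: "f \<in> Bb" and lamc: "max \<omega> 0 < lam"
  shows "(R f, \<lambda>y. lam * R f y - f y) \<in> full_gen T"
  unfolding full_gen_def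
proof (intro CollectI case_prodI conjI allI impI)
  show Rf: "R f \<in> Bb" by (rule R_Bb[OF f])
  show g: "(\<lambda>y. lam * R f y - f y) \<in> Bb" using Bb_lin[OF Rf f, of lam "-1"] by simp
  fix t :: real and x :: 'a assume t: "0 < t"
  obtain B where B: "\<And>y. \<bar>f y\<bar> \<le> B" using f unfolding Bb_def by blast
  define F where "F r = (if 0 < r then T r f x else 0)" for r
  have Fm: "F \<in> borel_measurable borel" unfolding F_def by (rule Tz_sec[OF f])
  have F0: "r \<le> 0 \<Longrightarrow> F r = 0" for r by (simp add: F_def)
  have Fb: "\<bar>F r\<bar> \<le> (M * B) * exp (max \<omega> 0 * r)" for r unfolding F_def by (rule Tz_bd[OF f B])
  define \<Phi> where "\<Phi> s = integral\<^sup>L lborel (\<lambda>r. indicator {0<..} r * (exp (- lam * r) * F (s + r)))" for s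
  have key: "\<Phi> t - \<Phi> 0 = integral\<^sup>L lborel (\<lambda>s. indicator {0<..t} s * (lam * \<Phi> s - F s))"
    unfolding \<Phi>_def by (rule G1_1D[OF Fm F0 Fb _ lamc t]) auto
  have TRs: "T s (R f) x = \<Phi> s" if "0 < s" for s
    unfolding \<Phi>_def F_def using TR[OF that f] by simp
  have \<Phi>0: "\<Phi> 0 = R f x"
    unfolding \<Phi>_def R_eq by (rule Bochner_Integration.integral_cong) (auto simp: F_def indicator_def)
  have "(LINT s:{0<..t}|lborel. T s (\<lambda>y. lam * R f y - f y) x)
      = integral\<^sup>L lborel (\<lambda>s. indicator {0<..t} s * (lam * \<Phi> s - F s))"
    unfolding set_lebesgue_integral_def
  proof (rule Bochner_Integration.integral_cong[OF refl])
    fix s :: real assume "s \<in> space lborel"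
    show "indicator {0<..t} s *\<^sub>R T s (\<lambda>y. lam * R f y - f y) x = indicator {0<..t} s * (lam * \<Phi> s - F s)"
    proof (cases "0 < s")
      case True
      have "T s (\<lambda>y. lam * R f y - f y) x = T s (\<lambda>y. lam * R f y + (-1) * f y) x" by simp
      also have "\<dots> = lam * T s (R f) x + (-1) * T s f x" by (rule T_lin[OF True Rf f])
      finally show ?thesis using TRs[OF True] True by (simp add: F_def)
    qed (simp add: indicator_def)
  qed
  then show "T t (R f) x - R f x = (LINT s:{0<..t}|lborel. T s (\<lambda>y. lam * R f y - f y) x)"
    using key TRs[OF t] \<Phi>0 by simp
qed

lemma G2:
  assumes wg: "(w, g) \<in> full_gen T" and lamc: "max \<omega> 0 + 1 < lam"
  shows "w = R (\<lambda>y. lam * w y - g y)"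
proof
  fix x
  have w: "w \<in> Bb" and g: "g \<in> Bb"
    and eqf: "\<And>t. 0 < t \<Longrightarrow> T t w x - w x = (LINT s:{0<..t}|lborel. T s g x)"
    using wg unfolding full_gen_def by auto
  obtain B where B: "\<And>y. \<bar>g y\<bar> \<le> B" using g unfolding Bb_def by blast
  define W where "W t = (if 0 < t then T t w x else 0)" for t
  define G where "G s = (if 0 < s then T s g x else 0)" for s
  have Wm: "W \<in> borel_measurable borel" unfolding W_def by (rule Tz_sec[OF w])
  have Gm: "G \<in> borel_measurable borel" unfolding G_def by (rule Tz_sec[OF g])
  have Gb: "\<bar>G s\<bar> \<le> (M * B) * exp (max \<omega> 0 * s)" if "0 < s" for s unfolding G_def by (rule Tz_bd[OF g B])
  have eq: "W t - w x = integral\<^sup>L lborel (\<lambda>s. indicator {0<..t} s * G s)" if t: "0 < t" for t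
  proof -
    have "W t - w x = (LINT s:{0<..t}|lborel. T s g x)" using eqf[OF t] t by (simp add: W_def)
    also have "\<dots> = integral\<^sup>L lborel (\<lambda>s. indicator {0<..t} s * G s)"
      unfolding set_lebesgue_integral_def
      by (rule Bochner_Integration.integral_cong) (auto simp: G_def indicator_def)
    finally show ?thesis .
  qed
  have key: "lam * integral\<^sup>L lborel (\<lambda>t. indicator {0<..} t * (exp (- lam * t) * W t))
    = w x + integral\<^sup>L lborel (\<lambda>s. indicator {0<..} s * (exp (- lam * s) * G s))"
    by (rule G2_1D[OF Wm Gm Gb _ lamc eq]) auto
  have RW: "integral\<^sup>L lborel (\<lambda>t. indicator {0<..} t * (exp (- lam * t) * W t)) = R w x"
    unfolding R_eq by (rule Bochner_Integration.integral_cong) (auto simp: W_def indicator_def)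
  have RG: "integral\<^sup>L lborel (\<lambda>s. indicator {0<..} s * (exp (- lam * s) * G s)) = R g x"
    unfolding R_eq by (rule Bochner_Integration.integral_cong) (auto simp: G_def indicator_def)
  have "R (\<lambda>y. lam * w y - g y) x = R (\<lambda>y. lam * w y + (-1) * g y) x" by simp
  also have "\<dots> = lam * R w x + (-1) * R g x" by (rule R_lin[OF w g])
  finally show "w x = R (\<lambda>y. lam * w y - g y) x" using key RW RG by simp
qed

end


definition contr :: "(('a::topological_space \<Rightarrow> real) \<Rightarrow> 'a \<Rightarrow> real) \<Rightarrow> real \<Rightarrow> bool" where
  "contr P q \<longleftrightarrow> 0 \<le> q \<and> q < 1 \<and>
     (\<forall>f\<in>Bb. \<forall>g\<in>Bb. \<forall>a b. P (\<lambda>y. a * f y + b * g y) = (\<lambda>y. a * P f y + b * P g y)) \<and>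
     (\<forall>f\<in>Bb. P f \<in> Bb) \<and>
     (\<forall>f\<in>Bb. \<forall>B. (\<forall>y. \<bar>f y\<bar> \<le> B) \<longrightarrow> (\<forall>y. \<bar>P f y\<bar> \<le> q * B))"

lemma contrD:
  assumes "contr P q"
  shows "0 \<le> q" "q < 1" "\<And>f g a b. f \<in> Bb \<Longrightarrow> g \<in> Bb \<Longrightarrow> P (\<lambda>y. a * f y + b * g y) = (\<lambda>y. a * P f y + b * P g y)"
    "\<And>f. f \<in> Bb \<Longrightarrow> P f \<in> Bb" "\<And>f B y. f \<in> Bb \<Longrightarrow> (\<And>y. \<bar>f y\<bar> \<le> B) \<Longrightarrow> \<bar>P f y\<bar> \<le> q * B"
  using assms unfolding contr_def by blast+

lemma contr_diff: "contr P q \<Longrightarrow> f \<in> Bb \<Longrightarrow> g \<in> Bb \<Longrightarrow> P (\<lambda>y. f y - g y) = (\<lambda>y. P f y - P g y)"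
  using contrD(3)[of P q f g 1 "-1"] by simp

lemma contr_zero: "contr P q \<Longrightarrow> P (\<lambda>y. 0) = (\<lambda>y. 0)"
  using contrD(3)[of P q "\<lambda>y. 0" "\<lambda>y. 0" 0 0] Bb_const[of 0] by simp

lemma contr_unique:
  assumes P: "contr P q" and d: "d \<in> Bb" and e: "\<And>y. d y = P d y"
  shows "d = (\<lambda>y. 0)"
proof -
  obtain B where B: "\<And>y. \<bar>d y\<bar> \<le> B" using d unfolding Bb_def by blast
  have n: "\<bar>d y\<bar> \<le> q ^ n * B" for n y
  proof (induction n arbitrary: y)
    case 0 then show ?case using B by simp
  next
    case (Suc n)
    have "\<bar>P d y\<bar> \<le> q * (q ^ n * B)" using contrD(5)[OF P d Suc] .
    then show ?case using e[of y] by simp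
  qed
  have "(\<lambda>n. q ^ n * B) \<longlonglongrightarrow> 0 * B"
    using contrD(1,2)[OF P] by (intro tendsto_mult LIMSEQ_power_zero tendsto_const) auto
  then have "\<bar>d y\<bar> \<le> 0" for y using n by (intro LIMSEQ_le_const[of "\<lambda>n. q ^ n * B"]) auto
  then show ?thesis by (auto simp: fun_eq_iff)
qed

lemma contr_fix_unique:
  assumes P: "contr P q" and f: "f \<in> Bb"
    and w1: "w1 \<in> Bb" "\<And>y. w1 y = f y + P w1 y" and w2: "w2 \<in> Bb" "\<And>y. w2 y = f y + P w2 y"
  shows "w1 = w2"
proof -
  have "(\<lambda>y. w1 y - w2 y) = (\<lambda>y. 0)"
  proof (rule contr_unique[OF P Bb_diff[OF w1(1) w2(1)]])
    fix y show "w1 y - w2 y = P (\<lambda>y. w1 y - w2 y) y"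
      using contr_diff[OF P w1(1) w2(1)] w1(2)[of y] w2(2)[of y] by simp
  qed
  then show ?thesis by (auto simp: fun_eq_iff dest: fun_cong)
qed

lemma contr_fix_exists:
  assumes P: "contr P q" and f: "f \<in> Bb" and Bf: "\<And>y. \<bar>f y\<bar> \<le> Bf"
  shows "\<exists>w\<in>Bb. (\<forall>y. w y = f y + P w y) \<and> (\<forall>y. \<bar>w y\<bar> \<le> Bf / (1 - q))"
proof -
  note q = contrD(1,2)[OF P]
  have Bf0: "0 \<le> Bf" using Bf[of undefined] by linarith
  define v where "v k = ((\<lambda>h y. f y + P h y) ^^ k) (\<lambda>y. 0)" for k
  have v0: "v 0 = (\<lambda>y. 0)" by (simp add: v_def)
  have vS: "v (Suc k) = (\<lambda>y. f y + P (v k) y)" for k by (simp add: v_def)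
  have vB: "v k \<in> Bb" for k
    by (induction k) (auto simp: v0 vS intro: Bb_const Bb_add f contrD(4)[OF P])
  have dif: "\<bar>v (Suc k) y - v k y\<bar> \<le> q ^ k * Bf" for k y
  proof (induction k arbitrary: y)
    case 0 then show ?case using Bf contr_zero[OF P] by (simp add: vS v0)
  next
    case (Suc k)
    have "v (Suc (Suc k)) y - v (Suc k) y = P (\<lambda>y. v (Suc k) y - v k y) y"
      using contr_diff[OF P vB vB, of "Suc k" k] by (simp add: vS[of "Suc k"] vS[of k])
    also have "\<bar>\<dots>\<bar> \<le> q * (q ^ k * Bf)"
      by (rule contrD(5)[OF P Bb_diff[OF vB vB]]) (rule Suc)
    finally show ?case by simp
  qed
  have tail: "\<bar>v m y - v k y\<bar> \<le> (q ^ k - q ^ m) * Bf / (1 - q)" if "k \<le> m" for k m y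
    using that
  proof (induction m rule: dec_induct)
    case base then show ?case by simp
  next
    case (step m)
    have "\<bar>v (Suc m) y - v k y\<bar> \<le> \<bar>v m y - v k y\<bar> + \<bar>v (Suc m) y - v m y\<bar>" by linarith
    also have "\<dots> \<le> (q ^ k - q ^ m) * Bf / (1 - q) + q ^ m * Bf" using step.IH dif[of m y] by linarith
    also have "\<dots> = (q ^ k - q ^ Suc m) * Bf / (1 - q)" using q by (simp add: field_simps)
    finally show ?case .
  qed
  have qk: "q ^ m \<ge> 0" for m using q by simp
  have tail2: "\<bar>v m y - v k y\<bar> \<le> q ^ k * Bf / (1 - q)" if "k \<le> m" for k m y
  proof -
    have "(q ^ k - q ^ m) * Bf / (1 - q) \<le> q ^ k * Bf / (1 - q)"
      using q Bf0 qk[of m] by (intro divide_right_mono mult_right_mono) auto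
    then show ?thesis using tail[OF that, of y] by linarith
  qed
  have lim0: "(\<lambda>k. q ^ k * Bf / (1 - q)) \<longlonglongrightarrow> 0 * Bf / (1 - q)"
    using q by (intro tendsto_divide tendsto_mult LIMSEQ_power_zero tendsto_const) auto
  have cau: "Cauchy (\<lambda>k. v k y)" for y
  proof (rule CauchyI)
    fix e :: real assume e: "0 < e"
    from order_tendstoD(2)[OF lim0, of "e/2"] e have "\<forall>\<^sub>F k in sequentially. q ^ k * Bf / (1 - q) < e / 2"
      by simp
    then obtain N where N: "\<And>k. k \<ge> N \<Longrightarrow> q ^ k * Bf / (1 - q) < e / 2" by (auto simp: eventually_sequentially)
    show "\<exists>M. \<forall>m\<ge>M. \<forall>n\<ge>M. norm (v m y - v n y) < e"
    proof (intro exI allI impI)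
      fix m n assume "N \<le> m" "N \<le> n"
      then have "\<bar>v m y - v N y\<bar> < e / 2" "\<bar>v n y - v N y\<bar> < e / 2"
        using tail2 N[of N] by (meson le_less_trans order_refl)+
      then show "norm (v m y - v n y) < e" by (simp only: real_norm_def)
    qed
  qed
  define w where "w y = lim (\<lambda>k. v k y)" for y
  have vl: "(\<lambda>k. v k y) \<longlonglongrightarrow> w y" for y
    unfolding w_def using cau[of y] by (simp add: Cauchy_convergent_iff convergent_LIMSEQ_iff)
  have wm: "w \<in> borel_measurable borel"
    using vB by (intro borel_measurable_LIMSEQ_real[OF vl]) (auto simp: Bb_def)
  have wb: "\<bar>w y\<bar> \<le> Bf / (1 - q)" for y
  proof (rule LIMSEQ_le_const2[OF tendsto_rabs[OF vl[of y]]])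
    have "\<bar>v k y\<bar> \<le> Bf / (1 - q)" for k using tail2[of 0 k y] by (simp add: v0)
    then show "\<exists>N. \<forall>n\<ge>N. \<bar>v n y\<bar> \<le> Bf / (1 - q)" by blast
  qed
  have wB: "w \<in> Bb" using wm wb unfolding Bb_def by blast
  have wv: "\<bar>w y - v k y\<bar> \<le> q ^ k * Bf / (1 - q)" for k y
  proof (rule LIMSEQ_le_const2[OF tendsto_rabs[OF tendsto_diff[OF vl[of y] tendsto_const[of "v k y"]]]])
    show "\<exists>N. \<forall>n\<ge>N. \<bar>v n y - v k y\<bar> \<le> q ^ k * Bf / (1 - q)" using tail2 by blast
  qed
  have Pl: "(\<lambda>k. P (v k) y) \<longlonglongrightarrow> P w y" for y
  proof -
    have b: "\<bar>P w y - P (v k) y\<bar> \<le> q * (q ^ k * Bf / (1 - q))" for k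
    proof -
      have "P w y - P (v k) y = P (\<lambda>y. w y - v k y) y" using contr_diff[OF P wB vB, of k] by simp
      also have "\<bar>\<dots>\<bar> \<le> q * (q ^ k * Bf / (1 - q))" by (rule contrD(5)[OF P Bb_diff[OF wB vB]]) (rule wv)
      finally show ?thesis .
    qed
    have "(\<lambda>k. q * (q ^ k * Bf / (1 - q))) \<longlonglongrightarrow> q * (0 * Bf / (1 - q))" by (intro tendsto_mult tendsto_const lim0)
    then have g0: "(\<lambda>k. q * (q ^ k * Bf / (1 - q))) \<longlonglongrightarrow> 0" by simp
    have ev: "\<forall>\<^sub>F k in sequentially. norm (P w y - P (v k) y) \<le> q * (q ^ k * Bf / (1 - q))"
      using b by simp
    have "(\<lambda>k. P w y - P (v k) y) \<longlonglongrightarrow> 0" by (rule Lim_null_comparison[OF ev g0])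
    then have "(\<lambda>k. P w y - (P w y - P (v k) y)) \<longlonglongrightarrow> P w y - 0" by (intro tendsto_diff tendsto_const)
    then show ?thesis by simp
  qed
  have fixw: "w y = f y + P w y" for y
  proof -
    have "(\<lambda>k. v (Suc k) y) \<longlonglongrightarrow> w y" using vl[of y] by (rule LIMSEQ_Suc)
    moreover have "(\<lambda>k. v (Suc k) y) \<longlonglongrightarrow> f y + P w y" unfolding vS using Pl[of y] by (intro tendsto_add tendsto_const)
    ultimately show ?thesis by (rule LIMSEQ_unique)
  qed
  show ?thesis using wB fixw wb by blast
qed

lemma contr_add: "contr P q \<Longrightarrow> f \<in> Bb \<Longrightarrow> g \<in> Bb \<Longrightarrow> P (\<lambda>y. f y + g y) = (\<lambda>y. P f y + P g y)"
  using contrD(3)[of P q f g 1 1] by simp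

lemma contr_conv:
  assumes Pn: "\<And>n. contr (Pn n) q" and P: "contr P q"
    and h2: "\<And>h. h \<in> Bb \<Longrightarrow> bp_conv (\<lambda>n. Pn n h) (P h)"
    and h3: "\<And>hs. (\<forall>n. hs n \<in> Bb) \<Longrightarrow> bp_conv hs (\<lambda>x. 0) \<Longrightarrow> bp_conv (\<lambda>n. Pn n (hs n)) (\<lambda>x. 0)"
    and f: "f \<in> Bb"
    and w: "w \<in> Bb" "\<And>y. w y = f y + P w y"
    and wn: "\<And>n. wn n \<in> Bb" "\<And>n y. wn n y = f y + Pn n (wn n) y"
    and bd: "\<And>n y. \<bar>wn n y\<bar> \<le> D" "\<And>y. \<bar>w y\<bar> \<le> D"
  shows "bp_conv (\<lambda>n y. wn n y - w y) (\<lambda>x. 0)"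
proof -
  have q: "0 \<le> q" "q < 1" using contrD(1,2)[OF P] by auto
  define d where "d n = (\<lambda>y. wn n y - w y)" for n
  define e where "e n = (\<lambda>y. Pn n w y - P w y)" for n
  have dB: "d n \<in> Bb" for n unfolding d_def by (rule Bb_diff[OF wn(1) w(1)])
  have eB: "e n \<in> Bb" for n unfolding e_def by (rule Bb_diff[OF contrD(4)[OF Pn w(1)] contrD(4)[OF P w(1)]])
  have db: "\<bar>d n y\<bar> \<le> 2 * D" for n y unfolding d_def using bd(1)[of n y] bd(2)[of y] by linarith
  have ebp: "bp_conv e (\<lambda>x. 0)"
  proof -
    have c: "bp_conv (\<lambda>n. Pn n w) (P w)" by (rule h2[OF w(1)])
    then obtain C where C: "\<And>n x. \<bar>Pn n w x\<bar> \<le> C" unfolding bp_conv_def by blast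
    obtain C' where C': "\<And>x. \<bar>P w x\<bar> \<le> C'" using contrD(4)[OF P w(1)] unfolding Bb_def by blast
    have "\<bar>e n x\<bar> \<le> C + C'" for n x unfolding e_def using C[of n x] C'[of x] by linarith
    moreover have "(\<lambda>n. e n x) \<longlonglongrightarrow> 0" for x
    proof -
      have "(\<lambda>n. Pn n w x - P w x) \<longlonglongrightarrow> P w x - P w x"
        using c unfolding bp_conv_def by (intro tendsto_diff tendsto_const) auto
      then show ?thesis by (simp add: e_def)
    qed
    ultimately show ?thesis unfolding bp_conv_def by blast
  qed
  have de: "d n = (\<lambda>y. e n y + Pn n (d n) y)" for n
  proof -
    have "Pn n (d n) = (\<lambda>y. Pn n (wn n) y - Pn n w y)" unfolding d_def by (rule contr_diff[OF Pn wn(1) w(1)])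
    then show ?thesis unfolding d_def e_def using wn(2)[of n] w(2) by (auto simp: fun_eq_iff)
  qed
  define it where "it n k = (Pn n ^^ k)" for n k
  have itB: "h \<in> Bb \<Longrightarrow> it n k h \<in> Bb" for n k h
    by (induction k) (auto simp: it_def intro: contrD(4)[OF Pn])
  have itS: "it n (Suc k) h = Pn n (it n k h)" for n k h by (simp add: it_def)
  have itS': "it n (Suc k) h = it n k (Pn n h)" for n k h
    unfolding it_def funpow_Suc_right by simp
  have itadd: "g1 \<in> Bb \<Longrightarrow> g2 \<in> Bb \<Longrightarrow> it n k (\<lambda>y. g1 y + g2 y) = (\<lambda>y. it n k g1 y + it n k g2 y)" for n k g1 g2
  proof (induction k)
    case 0 then show ?case by (simp add: it_def)
  next
    case (Suc k)
    then show ?case unfolding itS using contr_add[OF Pn itB[OF Suc.prems(1)] itB[OF Suc.prems(2)]] by simp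
  qed
  have itbd: "(\<And>y. \<bar>h y\<bar> \<le> B) \<Longrightarrow> h \<in> Bb \<Longrightarrow> \<bar>it n k h y\<bar> \<le> q ^ k * B" for n k h B y
  proof (induction k arbitrary: y)
    case 0 then show ?case by (simp add: it_def)
  next
    case (Suc k)
    have "\<bar>Pn n (it n k h) y\<bar> \<le> q * (q ^ k * B)" by (rule contrD(5)[OF Pn itB[OF Suc.prems(2)]]) (rule Suc.IH[OF Suc.prems])
    then show ?case unfolding itS by simp
  qed
  have decomp: "d n y = (\<Sum>i<K. it n i (e n) y) + it n K (d n) y" for n K y
  proof (induction K arbitrary: y)
    case 0 then show ?case by (simp add: it_def)
  next
    case (Suc K)
    have "it n K (d n) = it n K (\<lambda>y. e n y + Pn n (d n) y)" using de[of n] by metis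
    also have "\<dots> = (\<lambda>y. it n K (e n) y + it n K (Pn n (d n)) y)"
      by (rule itadd[OF eB contrD(4)[OF Pn dB]])
    finally have "it n K (d n) y = it n K (e n) y + it n (Suc K) (d n) y" by (simp add: itS')
    then show ?case using Suc.IH[of y] by simp
  qed
  have Ebp: "bp_conv (\<lambda>n. it n k (e n)) (\<lambda>x. 0)" for k
  proof (induction k)
    case 0 then show ?case using ebp by (simp add: it_def)
  next
    case (Suc k)
    have "bp_conv (\<lambda>n. Pn n (it n k (e n))) (\<lambda>x. 0)" by (rule h3) (use itB[OF eB] Suc in auto)
    then show ?case unfolding itS .
  qed
  have dl: "(\<lambda>n. d n y) \<longlonglongrightarrow> 0" for y
  proof (rule LIMSEQ_I)
    fix r :: real assume r: "0 < r"
    have "(\<lambda>K. q ^ K * (2 * D)) \<longlonglongrightarrow> 0 * (2 * D)" using q by (intro tendsto_mult LIMSEQ_power_zero tendsto_const) auto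
    from order_tendstoD(2)[OF this, of "r/2"] r obtain K where K: "q ^ K * (2 * D) < r / 2"
      by (auto simp: eventually_sequentially)
    have "(\<lambda>n. \<Sum>i<K. \<bar>it n i (e n) y\<bar>) \<longlonglongrightarrow> (\<Sum>i<K. \<bar>0::real\<bar>)"
      using Ebp unfolding bp_conv_def by (intro tendsto_sum tendsto_rabs) auto
    from order_tendstoD(2)[OF this, of "r/2"] r obtain N where N: "\<And>n. n \<ge> N \<Longrightarrow> (\<Sum>i<K. \<bar>it n i (e n) y\<bar>) < r / 2"
      by (auto simp: eventually_sequentially)
    show "\<exists>no. \<forall>n\<ge>no. norm (d n y - 0) < r"
    proof (intro exI allI impI)
      fix n assume n: "N \<le> n"
      have "\<bar>d n y\<bar> \<le> \<bar>\<Sum>i<K. it n i (e n) y\<bar> + \<bar>it n K (d n) y\<bar>" unfolding decomp[of n y K] by (rule abs_triangle_ineq)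
      also have "\<dots> \<le> (\<Sum>i<K. \<bar>it n i (e n) y\<bar>) + q ^ K * (2 * D)"
        by (intro add_mono sum_abs itbd[OF db dB])
      also have "\<dots> < r" using N[OF n] K by linarith
      finally show "norm (d n y - 0) < r" by simp
    qed
  qed
  show ?thesis unfolding bp_conv_def using db dl unfolding d_def by blast
qed

lemma dini_conv:
  fixes Rop :: "('a::metric_space \<Rightarrow> real) \<Rightarrow> 'a \<Rightarrow> real" and d :: "nat \<Rightarrow> 'a \<Rightarrow> real"
  assumes lin: "\<And>f g a b x. f \<in> Bb \<Longrightarrow> g \<in> Bb \<Longrightarrow> Rop (\<lambda>y. a * f y + b * g y) x = a * Rop f x + b * Rop g x"
    and pos: "\<And>f x. f \<in> Bb \<Longrightarrow> (\<forall>y. 0 \<le> f y) \<Longrightarrow> 0 \<le> Rop f x"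
    and cont: "\<And>f. f \<in> Bb \<Longrightarrow> continuous_on UNIV (Rop f)"
    and dct: "\<And>F f B x. (\<And>n. F n \<in> Bb) \<Longrightarrow> f \<in> Bb \<Longrightarrow> (\<And>n y. \<bar>F n y\<bar> \<le> B) \<Longrightarrow>
               (\<And>y. (\<lambda>n. F n y) \<longlonglongrightarrow> f y) \<Longrightarrow> (\<lambda>n. Rop (F n) x) \<longlonglongrightarrow> Rop f x"
    and dB: "\<And>n. d n \<in> Bb" and dc: "bp_conv d (\<lambda>x. 0)"
    and K: "compact K" and e: "0 < e"
  shows "\<forall>\<^sub>F n in sequentially. \<forall>x\<in>K. \<bar>Rop (d n) x\<bar> < e"
proof -
  obtain D where D: "\<And>n y. \<bar>d n y\<bar> \<le> D" and dl: "\<And>y. (\<lambda>n. d n y) \<longlonglongrightarrow> 0"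
    using dc unfolding bp_conv_def by blast
  define \<phi> where "\<phi> N y = (SUP m\<in>{N..}. \<bar>d m y\<bar>)" for N y
  have bdd: "bdd_above ((\<lambda>m. \<bar>d m y\<bar>) ` A)" for y A using D by (intro bdd_aboveI[where M=D]) auto
  have \<phi>ge: "\<bar>d n y\<bar> \<le> \<phi> N y" if "N \<le> n" for N n y
    unfolding \<phi>_def by (rule cSUP_upper) (use that bdd in auto)
  have \<phi>le: "\<phi> N y \<le> D" for N y unfolding \<phi>_def using D by (intro cSUP_least) auto
  have \<phi>0: "0 \<le> \<phi> N y" for N y using \<phi>ge[of N N y] by linarith
  have \<phi>m: "\<phi> N \<in> borel_measurable borel" for N
  proof -
    have "(\<lambda>y. SUP m\<in>{N..}. \<bar>d m y\<bar>) \<in> borel_measurable borel"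
    proof (rule borel_measurable_cSUP)
      show "(\<lambda>y. \<bar>d m y\<bar>) \<in> borel_measurable borel" for m
        using dB[of m] unfolding Bb_def by (intro borel_measurable_abs) blast
    qed (use bdd in auto)
    then show ?thesis by (simp add: \<phi>_def[abs_def])
  qed
  have \<phi>B: "\<phi> N \<in> Bb" for N unfolding Bb_def using \<phi>m \<phi>le \<phi>0 by (auto intro!: exI[of _ D])
  have \<phi>mono: "\<phi> N' y \<le> \<phi> N y" if "N \<le> N'" for N N' y
    unfolding \<phi>_def using that bdd by (intro cSUP_subset_mono) auto
  have \<phi>l: "(\<lambda>N. \<phi> N y) \<longlonglongrightarrow> 0" for y
  proof (rule LIMSEQ_I)
    fix r :: real assume r: "0 < r"
    from LIMSEQ_D[OF dl[of y], of "r/2"] r obtain N0 where N0: "\<And>n. n \<ge> N0 \<Longrightarrow> \<bar>d n y\<bar> < r / 2" by auto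
    have "\<phi> N0 y \<le> r / 2" unfolding \<phi>_def using N0 by (intro cSUP_least) (auto intro: less_imp_le)
    then show "\<exists>no. \<forall>N\<ge>no. norm (\<phi> N y - 0) < r"
    proof (intro exI[of _ N0] allI impI)
      fix N assume "N0 \<le> N" "\<phi> N0 y \<le> r / 2"
      then show "norm (\<phi> N y - 0) < r" using \<phi>mono[of N0 N y] \<phi>0[of N y] r by simp
    qed
  qed
  have R0: "Rop (\<lambda>y. 0) x = 0" for x using lin[OF Bb_const[of 0] Bb_const[of 0], of 0 0 x] by simp
  have Rl: "(\<lambda>N. Rop (\<phi> N) x) \<longlonglongrightarrow> 0" for x
  proof -
    have "(\<lambda>N. Rop (\<phi> N) x) \<longlonglongrightarrow> Rop (\<lambda>y. 0) x"
    proof (rule dct[where B=D])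
      show "\<phi> n \<in> Bb" for n by (rule \<phi>B)
      show "(\<lambda>y. 0) \<in> Bb" by (rule Bb_const)
      show "\<bar>\<phi> n y\<bar> \<le> D" for n y using \<phi>le \<phi>0 by (simp add: abs_of_nonneg)
      show "(\<lambda>n. \<phi> n y) \<longlonglongrightarrow> 0" for y by (rule \<phi>l)
    qed
    then show ?thesis using R0 by simp
  qed
  have Rdiff: "Rop (\<lambda>y. f y - g y) x = Rop f x - Rop g x" if "f \<in> Bb" "g \<in> Bb" for f g x
    using lin[OF that, of 1 "-1" x] by simp
  have Radd: "Rop (\<lambda>y. f y + g y) x = Rop f x + Rop g x" if "f \<in> Bb" "g \<in> Bb" for f g x
    using lin[OF that, of 1 1 x] by simp
  have Rmono: "Rop (\<phi> N') x \<le> Rop (\<phi> N) x" if "N \<le> N'" for N N' x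
    using pos[OF Bb_diff[OF \<phi>B \<phi>B], of N N' x] \<phi>mono[OF that] Rdiff[OF \<phi>B \<phi>B, of N N' x] by simp
  have Rdom: "\<bar>Rop (d n) x\<bar> \<le> Rop (\<phi> N) x" if "N \<le> n" for N n x
  proof -
    have a1: "\<forall>y. 0 \<le> \<phi> N y - d n y" and a2: "\<forall>y. 0 \<le> \<phi> N y + d n y"
    proof -
      have "d n y \<le> \<phi> N y" "- d n y \<le> \<phi> N y" for y using abs_le_D1[OF \<phi>ge[OF that]] abs_le_D2[OF \<phi>ge[OF that]] by auto
      note b = this
      show "\<forall>y. 0 \<le> \<phi> N y - d n y"
      proof
        fix y show "0 \<le> \<phi> N y - d n y" using b(1)[of y] by linarith
      qed
      show "\<forall>y. 0 \<le> \<phi> N y + d n y"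
      proof
        fix y show "0 \<le> \<phi> N y + d n y" using b(2)[of y] by linarith
      qed
    qed
    have "0 \<le> Rop (\<lambda>y. \<phi> N y - d n y) x" by (rule pos[OF Bb_diff[OF \<phi>B dB] a1])
    moreover have "0 \<le> Rop (\<lambda>y. \<phi> N y + d n y) x" by (rule pos[OF Bb_add[OF \<phi>B dB] a2])
    ultimately show ?thesis using Rdiff[OF \<phi>B dB, of N n x] Radd[OF \<phi>B dB, of N n x] by linarith
  qed
  define U where "U N = {x. Rop (\<phi> N) x < e}" for N
  have Uo: "open (U N)" for N unfolding U_def by (rule open_Collect_less[OF cont[OF \<phi>B] continuous_on_const])
  have Ucov: "K \<subseteq> (\<Union>N\<in>UNIV. U N)"
  proof
    fix x assume "x \<in> K"
    from order_tendstoD(2)[OF Rl[of x] e] obtain N where "Rop (\<phi> N) x < e" by (auto simp: eventually_sequentially)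
    then show "x \<in> (\<Union>N\<in>UNIV. U N)" unfolding U_def by blast
  qed
  obtain C where C0: "C \<subseteq> UNIV" and C: "finite C" "K \<subseteq> (\<Union>N\<in>C. U N)"
    by (rule compactE_image[OF K Uo Ucov])
  define N where "N = Max (insert 0 C)"
  have KU: "K \<subseteq> U N"
  proof
    fix x assume "x \<in> K"
    then obtain c where c: "c \<in> C" "x \<in> U c" using C(2) by blast
    have "c \<le> N" unfolding N_def using C(1) c(1) by (intro Max_ge) auto
    then show "x \<in> U N" using c(2) Rmono[of c N x] unfolding U_def by simp
  qed
  show ?thesis unfolding eventually_sequentially
  proof (intro exI allI impI ballI)
    fix n x assume "N \<le> n" "x \<in> K"
    then have "Rop (\<phi> N) x < e" using KU unfolding U_def by blast
    then show "\<bar>Rop (d n) x\<bar> < e" using Rdom[of N n x] \<open>N \<le> n\<close> by linarith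
  qed
qed


lemma lam_minus_iff: "(u, f) \<in> lam_minus lam C \<longleftrightarrow> (\<exists>g. (u, g) \<in> C \<and> f = (\<lambda>x. lam * u x - g x))"
  unfolding lam_minus_def by auto

lemma rel_plus_iff: "(u, g) \<in> rel_plus A B' \<longleftrightarrow> (\<exists>h. (u, h) \<in> A \<and> g = (\<lambda>x. h x + B' u x))"
  unfolding rel_plus_def by auto

lemma rel_inv_iff: "(a, b) \<in> rel_inv C \<longleftrightarrow> (b, a) \<in> C"
  by (simp add: rel_inv_def)

lemma mem_res_iff:
  "(f, v) \<in> rel_inv (lam_minus lam (rel_plus A B')) \<longleftrightarrow> (\<exists>g. (v, g) \<in> A \<and> f = (\<lambda>x. lam * v x - (g x + B' v x)))"
  by (auto simp: rel_inv_iff lam_minus_iff rel_plus_iff)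

context SG begin

lemma resolvent_char:
  assumes lamc: "max \<omega> 0 + 1 < lam"
    and C: "contr (\<lambda>h. B' (R h)) q" and f: "f \<in> Bb" and w: "w \<in> Bb" and wfix: "\<And>y. w y = f y + B' (R w) y"
  shows "(f, v) \<in> rel_inv (lam_minus lam (rel_plus (full_gen T) B')) \<longleftrightarrow> v = R w"
proof
  assume "(f, v) \<in> rel_inv (lam_minus lam (rel_plus (full_gen T) B'))"
  then obtain g where vg: "(v, g) \<in> full_gen T" and fe: "f = (\<lambda>x. lam * v x - (g x + B' v x))"
    unfolding mem_res_iff by blast
  have v: "v \<in> Bb" and g: "g \<in> Bb" using vg unfolding full_gen_def by auto
  define h where "h = (\<lambda>y. lam * v y - g y)"
  have hB: "h \<in> Bb" unfolding h_def using Bb_lin[OF v g, of lam "-1"] by simp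
  have vR: "v = R h" unfolding h_def by (rule G2[OF vg lamc])
  have hfix: "h y = f y + B' (R h) y" for y
    using fe vR[symmetric] by (simp add: h_def)
  have "h = w" by (rule contr_fix_unique[OF C f hB hfix w wfix])
  then show "v = R w" using vR by simp
next
  assume vw: "v = R w"
  have lamc': "max \<omega> 0 < lam" using lamc by (auto simp: max_def split: if_splits)
  have G: "(R w, \<lambda>y. lam * R w y - w y) \<in> full_gen T" by (rule G1[OF w lamc'])
  have "f = (\<lambda>x. lam * R w x - ((lam * R w x - w x) + B' (R w) x))"
    using wfix by (auto simp: fun_eq_iff algebra_simps)
  then show "(f, v) \<in> rel_inv (lam_minus lam (rel_plus (full_gen T) B'))"
    unfolding mem_res_iff vw using G by blast
qed

end

lemma contr_pert:
  fixes T :: "real \<Rightarrow> ('a::polish_space \<Rightarrow> real) \<Rightarrow> ('a \<Rightarrow> real)"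
  assumes S: "SG T M \<omega> lam" and lamc: "max \<omega> 0 < lam"
    and ad: "admissible_pert T \<omega> B' BT'"
    and bd: "\<And>h y Bh. h \<in> Bb \<Longrightarrow> (\<And>y. \<bar>h y\<bar> \<le> Bh) \<Longrightarrow> \<bar>B' (laplace T lam h) y\<bar> \<le> (1/2) * Bh"
  shows "contr (\<lambda>h. B' (laplace T lam h)) (1/2)"
proof -
  interpret SG T M \<omega> lam by fact
  have ko: "kernel_op (\<lambda>f. B' (laplace T lam f))" using ad SG.lam[OF S] unfolding admissible_pert_def by blast
  obtain C where C: "krep (\<lambda>f. B' (laplace T lam f)) C" using kernel_krep[OF ko] by blast
  have dom: "\<forall>f\<in>Domain (full_gen T). B' f \<in> Bb" using ad unfolding admissible_pert_def by blast
  show ?thesis unfolding contr_def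
  proof (intro conjI ballI allI impI)
    fix f g :: "'a \<Rightarrow> real" and a b :: real assume "f \<in> Bb" "g \<in> Bb"
    then show "B' (R (\<lambda>y. a * f y + b * g y)) = (\<lambda>y. a * B' (R f) y + b * B' (R g) y)"
      using K_lin[OF C] by (auto simp: fun_eq_iff)
  next
    fix f :: "'a \<Rightarrow> real" assume f: "f \<in> Bb"
    have "R f \<in> Domain (full_gen T)" using G1[OF f lamc] by blast
    then show "B' (R f) \<in> Bb" using dom by blast
  next
    fix f :: "'a \<Rightarrow> real" and Bh y assume "f \<in> Bb" "\<forall>y. \<bar>f y\<bar> \<le> Bh"
    then show "\<bar>B' (R f) y\<bar> \<le> 1 / 2 * Bh" using bd by blast
  qed auto
qed


theorem corollary5p3:
  fixes T :: "real \<Rightarrow> ('a::polish_space \<Rightarrow> real) \<Rightarrow> ('a \<Rightarrow> real)"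
    and M \<omega> :: real
    and B :: "('a \<Rightarrow> real) \<Rightarrow> ('a \<Rightarrow> real)"
    and BT :: "real \<Rightarrow> ('a \<Rightarrow> real) \<Rightarrow> ('a \<Rightarrow> real)"
    and Bn :: "nat \<Rightarrow> ('a \<Rightarrow> real) \<Rightarrow> ('a \<Rightarrow> real)"
    and BnT :: "nat \<Rightarrow> real \<Rightarrow> ('a \<Rightarrow> real) \<Rightarrow> ('a \<Rightarrow> real)"
  assumes lc: "locally_compact_space (euclidean :: 'a topology)"
    and sg: "kernel_semigroup T M \<omega>"
    and cb: "Cb_semigroup T"
    and sf: "\<forall>t>0. strong_feller (T t)"
    and adB: "admissible_pert T \<omega> B BT"
    and adBn: "\<forall>n. admissible_pert T \<omega> (Bn n) (BnT n)"
    and h1: "\<forall>\<epsilon>>0. \<exists>lam0. \<forall>lam\<ge>lam0. \<forall>n. opn (\<lambda>f. Bn n (laplace T lam f)) \<le> \<epsilon>"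
    and h2: "\<exists>lam0. \<forall>lam\<ge>lam0. \<forall>h\<in>Bb.
               bp_conv (\<lambda>n. Bn n (laplace T lam h)) (B (laplace T lam h))"
    and h3: "\<exists>lam0. \<forall>lam\<ge>lam0. \<forall>hs. (\<forall>n. hs n \<in> Bb) \<and> bp_conv hs (\<lambda>x. 0)
               \<longrightarrow> bp_conv (\<lambda>n. Bn n (laplace T lam (hs n))) (\<lambda>x. 0)"
    and pos: "\<exists>lam0. \<forall>lam\<ge>lam0. \<forall>f\<in>Bb. (\<forall>x. f x \<ge> 0) \<longrightarrow> (\<forall>x. laplace T lam f x \<ge> 0)"
  shows "\<exists>lam0. \<forall>lam\<ge>lam0. \<forall>f\<in>Bb. \<exists>u us.
           (\<forall>v. (f, v) \<in> rel_inv (lam_minus lam (rel_plus (full_gen T) B)) \<longleftrightarrow> v = u) \<and>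
           (\<forall>n v. (f, v) \<in> rel_inv (lam_minus lam (rel_plus (full_gen T) (Bn n))) \<longleftrightarrow> v = us n) \<and>
           (\<forall>K. compact K \<longrightarrow> uniform_limit K us u sequentially)"
proof -
  obtain l1 where l1: "\<And>lam n. lam \<ge> l1 \<Longrightarrow> opn (\<lambda>f. Bn n (laplace T lam f)) \<le> 1/2"
    using h1[rule_format, of "1/2"] by auto
  obtain l2 where l2: "\<And>lam h. lam \<ge> l2 \<Longrightarrow> h \<in> Bb \<Longrightarrow> bp_conv (\<lambda>n. Bn n (laplace T lam h)) (B (laplace T lam h))"
    using h2 by blast
  obtain l3 where l3: "\<And>lam hs. lam \<ge> l3 \<Longrightarrow> (\<forall>n. hs n \<in> Bb) \<Longrightarrow> bp_conv hs (\<lambda>x. 0) \<Longrightarrow> bp_conv (\<lambda>n. Bn n (laplace T lam (hs n))) (\<lambda>x. 0)"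
    using h3 by blast
  obtain l4 where l4: "\<And>lam f x. lam \<ge> l4 \<Longrightarrow> f \<in> Bb \<Longrightarrow> (\<forall>x. f x \<ge> 0) \<Longrightarrow> laplace T lam f x \<ge> 0"
    using pos by blast
  define lam0 where "lam0 = max (max (max l1 l2) (max l3 l4)) (max \<omega> 0 + 2)"
  show ?thesis
  proof (intro exI[of _ lam0] allI impI ballI)
    fix lam :: real and f :: "'a \<Rightarrow> real"
    assume lam: "lam0 \<le> lam" and f: "f \<in> Bb"
    have lams: "l1 \<le> lam" "l2 \<le> lam" "l3 \<le> lam" "l4 \<le> lam" "max \<omega> 0 + 1 < lam" "max \<omega> 0 < lam"
      "\<omega> < lam" "0 < lam"
      using lam unfolding lam0_def by (auto simp: max_def split: if_splits)
    have S: "SG T M \<omega> lam" by unfold_locales (use sg sf lams in auto)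
    interpret SG T M \<omega> lam by (rule S)
    have PnC: "contr (\<lambda>h. Bn n (laplace T lam h)) (1/2)" for n
    proof (rule contr_pert[OF S lams(6) adBn[rule_format, of n]])
      fix h :: "'a \<Rightarrow> real" and y Bh assume h: "h \<in> Bb" and hb: "\<And>y. \<bar>h y\<bar> \<le> Bh"
      have ko: "kernel_op (\<lambda>f. Bn n (laplace T lam f))"
        using adBn lams(7) unfolding admissible_pert_def by blast
      obtain C where C: "krep (\<lambda>f. Bn n (laplace T lam f)) C" using kernel_krep[OF ko] by blast
      have B0: "0 \<le> Bh" using hb[of undefined] by linarith
      have "\<bar>Bn n (laplace T lam h) y\<bar> \<le> opn (\<lambda>f. Bn n (laplace T lam f)) * Bh"
        using opn_le2[OF C h hb] by simp
      also have "\<dots> \<le> 1/2 * Bh" using l1[OF lams(1)] B0 by (intro mult_right_mono) auto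
      finally show "\<bar>Bn n (laplace T lam h) y\<bar> \<le> 1/2 * Bh" .
    qed
    have PC: "contr (\<lambda>h. B (laplace T lam h)) (1/2)"
    proof (rule contr_pert[OF S lams(6) adB])
      fix h :: "'a \<Rightarrow> real" and y Bh assume h: "h \<in> Bb" and hb: "\<And>y. \<bar>h y\<bar> \<le> Bh"
      have c: "bp_conv (\<lambda>n. Bn n (laplace T lam h)) (B (laplace T lam h))" by (rule l2[OF lams(2) h])
      have "(\<lambda>n. \<bar>Bn n (laplace T lam h) y\<bar>) \<longlonglongrightarrow> \<bar>B (laplace T lam h) y\<bar>"
        using c unfolding bp_conv_def by (intro tendsto_rabs) auto
      moreover have "\<bar>Bn n (laplace T lam h) y\<bar> \<le> 1/2 * Bh" for n
        using contrD(5)[OF PnC h hb] .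
      ultimately show "\<bar>B (laplace T lam h) y\<bar> \<le> 1/2 * Bh"
        by (intro LIMSEQ_le_const2) auto
    qed
    obtain Bf where Bf: "\<And>y. \<bar>f y\<bar> \<le> Bf" using f unfolding Bb_def by blast
    obtain w where w: "w \<in> Bb" "\<And>y. w y = f y + B (laplace T lam w) y" "\<And>y. \<bar>w y\<bar> \<le> Bf / (1 - 1/2)"
      using contr_fix_exists[OF PC f Bf] by blast
    have "\<forall>n. \<exists>w. w \<in> Bb \<and> (\<forall>y. w y = f y + Bn n (laplace T lam w) y) \<and> (\<forall>y. \<bar>w y\<bar> \<le> Bf / (1 - 1/2))"
      using contr_fix_exists[OF PnC f Bf] by blast
    then obtain wn where wn: "\<And>n. wn n \<in> Bb" "\<And>n y. wn n y = f y + Bn n (laplace T lam (wn n)) y"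
      "\<And>n y. \<bar>wn n y\<bar> \<le> Bf / (1 - 1/2)"
      by metis
    define u where "u = laplace T lam w"
    define us where "us n = laplace T lam (wn n)" for n
    have c1: "(f, v) \<in> rel_inv (lam_minus lam (rel_plus (full_gen T) B)) \<longleftrightarrow> v = u" for v
      unfolding u_def by (rule resolvent_char[OF lams(5) PC f w(1) w(2)])
    have c2: "(f, v) \<in> rel_inv (lam_minus lam (rel_plus (full_gen T) (Bn n))) \<longleftrightarrow> v = us n" for n v
      unfolding us_def by (rule resolvent_char[OF lams(5) PnC f wn(1) wn(2)])
    have dconv: "bp_conv (\<lambda>n y. wn n y - w y) (\<lambda>x. 0)"
    proof (rule contr_conv[OF PnC PC _ _ f w(1,2) wn(1,2) wn(3) w(3)])
      show "bp_conv (\<lambda>n. Bn n (laplace T lam h)) (B (laplace T lam h))" if "h \<in> Bb" for h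
        by (rule l2[OF lams(2) that])
      show "bp_conv (\<lambda>n. Bn n (laplace T lam (hs n))) (\<lambda>x. 0)" if "\<forall>n. hs n \<in> Bb" "bp_conv hs (\<lambda>x. 0)" for hs
        by (rule l3[OF lams(3) that])
    qed
    have c3: "uniform_limit K us u sequentially" if K: "compact K" for K
      unfolding uniform_limit_iff
    proof (intro allI impI)
      fix e :: real assume e: "0 < e"
      have ev: "\<forall>\<^sub>F n in sequentially. \<forall>x\<in>K. \<bar>laplace T lam (\<lambda>y. wn n y - w y) x\<bar> < e"
      proof (rule dini_conv[where Rop = "laplace T lam"])
        show "laplace T lam (\<lambda>y. a * f y + b * g y) x = a * laplace T lam f x + b * laplace T lam g x"
          if "f \<in> Bb" "g \<in> Bb" for f g a b x using R_lin[OF that] .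
        show "0 \<le> laplace T lam f x" if "f \<in> Bb" "\<forall>y. 0 \<le> f y" for f x using l4[OF lams(4) that] .
        show "continuous_on UNIV (laplace T lam f)" if "f \<in> Bb" for f using R_cont[OF that] .
        show "(\<lambda>n. laplace T lam (F n) x) \<longlonglongrightarrow> laplace T lam f x"
          if "\<And>n. F n \<in> Bb" "f \<in> Bb" "\<And>n y. \<bar>F n y\<bar> \<le> B" "\<And>y. (\<lambda>n. F n y) \<longlonglongrightarrow> f y" for F f B x
          using R_dct[OF that] .
        show "(\<lambda>y. wn n y - w y) \<in> Bb" for n by (rule Bb_diff[OF wn(1) w(1)])
        show "bp_conv (\<lambda>n y. wn n y - w y) (\<lambda>x. 0)" by (rule dconv)
      qed (use K e in auto)
      show "\<forall>\<^sub>F n in sequentially. \<forall>x\<in>K. dist (us n x) (u x) < e"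
        using ev
      proof (rule eventually_mono)
        fix n assume "\<forall>x\<in>K. \<bar>laplace T lam (\<lambda>y. wn n y - w y) x\<bar> < e"
        then show "\<forall>x\<in>K. dist (us n x) (u x) < e"
          unfolding us_def u_def dist_real_def using R_diff[OF wn(1) w(1)] by simp
      qed
    qed
    show "\<exists>u us. (\<forall>v. (f, v) \<in> rel_inv (lam_minus lam (rel_plus (full_gen T) B)) \<longleftrightarrow> v = u) \<and>
           (\<forall>n v. (f, v) \<in> rel_inv (lam_minus lam (rel_plus (full_gen T) (Bn n))) \<longleftrightarrow> v = us n) \<and>
           (\<forall>K. compact K \<longrightarrow> uniform_limit K us u sequentially)"
      using c1 c2 c3 by blast
  qed
qed


end
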